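(* Let $N\ge3$ and $p>p_{\rm S}=\frac{N+2}{N-2}$. There exist $\Theta^*\in(0,\pi)$ and a function $U^*\in C^2(0,\Theta^*]$ which solves $U''+(N-1)\frac{\cos\theta}{\sin\theta}U'+U^p=0$ on $(0,\Theta^* )$, $U^*(\Theta^* )=0$, $U^*>0$ on $(0,\Theta^* )$, and $$U^*(\theta)=a\left(\cos\tfrac{\theta}{2}\right)^{-(N-2)}\left(2\tan\tfrac{\theta}{2}\right)^{-\mu}(1+o(1))\quad\text{as }\theta\downarrow0,$$ where $\mu:=\frac{2}{p-1}$ and $a:=\{\mu(N-2-\mu)\}^{\mu/2}$. *)

theory Defs
  imports Complex_Main
begin

end

theory Submission
  imports Defs "HOL-Analysis.Analysis"
begin


definition pw :: "real \<Rightarrow> complex \<Rightarrow> complex" where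
  "pw x l = exp (l * Ln (of_real x))"

lemma pw_norm: "x > 0 \<Longrightarrow> norm (pw x l) = x powr Re l"
  by (simp add: pw_def Ln_of_real powr_def)

lemma pw_add: "pw x l * pw x m = pw x (l + m)"
  by (simp add: pw_def distrib_right exp_add)

lemma pw_deriv:
  assumes "x > 0"
  shows "((\<lambda>x. pw x l) has_vector_derivative (l * pw x l / of_real x)) (at x within S)"
proof -
  have "((\<lambda>w. exp (l * Ln w)) has_field_derivative (exp (l * Ln (of_real x)) * (l * (1 / of_real x)))) (at (of_real x))"
    using assms
    by (auto intro!: derivative_eq_intros simp: complex_nonpos_Reals_iff field_simps)
  then show ?thesis unfolding pw_def
    by (rule has_vector_derivative_real_field[THEN has_vector_derivative_eq_rhs]) (simp add: field_simps)
qed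

lemma pw_cont: "continuous_on {0<..} (\<lambda>x. pw x l)"
  by (metis continuous_on_eq_continuous_within greaterThan_iff has_vector_derivative_continuous pw_deriv)

lemma cont_ext0:
  fixes f :: "real \<Rightarrow> 'a::real_normed_vector"
  assumes "b > 0" "continuous_on {0<..b} f" "\<And>s. s \<in> {0<..b} \<Longrightarrow> norm (f s) \<le> g s" "(g \<longlongrightarrow> 0) (at_right 0)"
  shows "continuous_on {0..b} (\<lambda>s. if s = 0 then 0 else f s)"
  unfolding continuous_on_eq_continuous_within
proof
  fix x assume x: "x \<in> {0..b}"
  show "continuous (at x within {0..b}) (\<lambda>s. if s = 0 then 0 else f s)"
  proof (cases "x = 0")
    case True
    have "((\<lambda>s. if s = 0 then 0 else f s) \<longlongrightarrow> 0) (at 0 within {0..b})"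
    proof -
      have "((\<lambda>s. if s = 0 then 0 else f s) \<longlongrightarrow> 0) (at_right 0)"
      proof (rule Lim_null_comparison[OF _ assms(4)])
        show "\<forall>\<^sub>F s in at_right 0. norm (if s = 0 then 0 else f s) \<le> g s"
          unfolding eventually_at_right_field
          using assms(1,3) by (intro exI[of _ b]) (auto simp: less_imp_le)
      qed
      then show ?thesis using assms(1) by (simp add: at_within_Icc_at_right)
    qed
    then show ?thesis using True by (simp add: continuous_within)
  next
    case False
    then have xp: "x > 0" using x by auto
    have "continuous (at x within {0<..b}) f"
      using assms(2) x xp by (simp add: continuous_on_eq_continuous_within)
    then have "continuous (at x within {0<..b}) (\<lambda>s. if s = 0 then 0 else f s)"
      by (rule continuous_transform_within[where \<delta>=x]) (use xp x in \<open>auto simp: dist_real_def\<close>)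
    moreover have "at x within {0..b} = at x within {0<..b}"
      by (rule at_within_nhd[where S="{0<..}"]) (use xp in auto)
    ultimately show ?thesis by (simp add: continuous_within)
  qed
qed

lemma pm2: "(s::real) > 0 \<Longrightarrow> s powr e * s\<^sup>2 = s powr (e+2)"
  by (simp add: powr_add powr_numeral)
lemma pmk: "(s::real) > 0 \<Longrightarrow> s powr e * s powr k = s powr (e+k)"
  by (simp add: powr_add)

lemma powr_tendsto_0_right: "e > 0 \<Longrightarrow> ((\<lambda>s::real. s powr e) \<longlongrightarrow> 0) (at_right 0)"
  by (rule tendsto_zero_powrI[where b=e]) (auto intro: tendsto_ident_at eventually_at_rightI[of 0 1])

lemma pw_minus1: "x > 0 \<Longrightarrow> pw x (-1) = 1 / of_real x"
proof -
  assume x: "x > 0"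
  have "exp (complex_of_real (ln x)) = of_real x" using x by (metis exp_ln exp_of_real)
  then show ?thesis using x by (simp add: pw_def exp_minus Ln_of_real divide_inverse)
qed

definition Kop :: "complex \<Rightarrow> (real \<Rightarrow> complex) \<Rightarrow> real \<Rightarrow> complex" where
  "Kop l G t = pw t l * integral {0..t} (\<lambda>s. if s = 0 then 0 else pw s (-l-1) * G s)"

definition W :: "real \<Rightarrow> real \<Rightarrow> real \<Rightarrow> real" where
  "W t1 k t = max (t\<^sup>2) (t1 powr (2-k) * t powr k)"

lemma Kop_F_cont:
  fixes l :: complex and G :: "real \<Rightarrow> complex"
  assumes l: "Re l \<le> 0" and k: "2 \<le> k" and b: "0 < b"
    and Gc: "continuous_on {0<..b} G"
    and Gb: "\<And>s. s \<in> {0<..b} \<Longrightarrow> norm (G s) \<le> A * s\<^sup>2 + B * s powr k"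
  shows "continuous_on {0..b} (\<lambda>s. if s = 0 then 0 else pw s (-l-1) * G s)"
proof (rule cont_ext0[OF b])
  show "continuous_on {0<..b} (\<lambda>s. pw s (- l - 1) * G s)"
    by (intro continuous_intros Gc continuous_on_subset[OF pw_cont]) auto
  show "norm (pw s (- l - 1) * G s) \<le> (\<bar>A\<bar> * s powr (1 - Re l) + \<bar>B\<bar> * s powr (k - 1 - Re l))" if s: "s \<in> {0<..b}" for s
  proof -
    have sp: "s > 0" using s by auto
    have "norm (pw s (- l - 1) * G s) = s powr (- Re l - 1) * norm (G s)"
      using sp by (simp add: norm_mult pw_norm)
    also have "\<dots> \<le> s powr (- Re l - 1) * (\<bar>A\<bar> * s\<^sup>2 + \<bar>B\<bar> * s powr k)"
    proof (intro mult_left_mono)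
      have "A * s\<^sup>2 \<le> \<bar>A\<bar> * s\<^sup>2" "B * s powr k \<le> \<bar>B\<bar> * s powr k"
        by (intro mult_right_mono; simp)+
      then show "norm (G s) \<le> \<bar>A\<bar> * s\<^sup>2 + \<bar>B\<bar> * s powr k" using Gb[OF s] by linarith
    qed auto
    also have "\<dots> = \<bar>A\<bar> * (s powr (- Re l - 1) * s\<^sup>2) + \<bar>B\<bar> * (s powr (- Re l - 1) * s powr k)"
      by (simp add: algebra_simps)
    also have "\<dots> = \<bar>A\<bar> * s powr (1 - Re l) + \<bar>B\<bar> * s powr (k - 1 - Re l)"
    proof -
      have e1: "s powr (- Re l - 1) * s\<^sup>2 = s powr (1 - Re l)"
        using pm2[OF sp, of "- Re l - 1"] by (simp add: algebra_simps)
      have e2: "s powr (- Re l - 1) * s powr k = s powr (k - 1 - Re l)"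
        using pmk[OF sp, of "- Re l - 1" k] by (simp add: algebra_simps)
      show ?thesis by (simp add: e1 e2)
    qed
    finally show ?thesis .
  qed
  have "((\<lambda>s. \<bar>A\<bar> * s powr (1 - Re l) + \<bar>B\<bar> * s powr (k - 1 - Re l)) \<longlongrightarrow> \<bar>A\<bar> * 0 + \<bar>B\<bar> * 0) (at_right 0)"
    using l k by (intro tendsto_intros powr_tendsto_0_right) auto
  then show "((\<lambda>s. \<bar>A\<bar> * s powr (1 - Re l) + \<bar>B\<bar> * s powr (k - 1 - Re l)) \<longlongrightarrow> 0) (at_right 0)" by simp
qed

lemma Kop_diff:
  fixes l :: complex and G G' :: "real \<Rightarrow> complex"
  assumes l: "Re l \<le> 0" and k: "2 \<le> k" and b: "0 < b"
    and Gc: "continuous_on {0<..b} G"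
    and Gb: "\<And>s. s \<in> {0<..b} \<Longrightarrow> norm (G s) \<le> A * s\<^sup>2 + B * s powr k"
    and Gc': "continuous_on {0<..b} G'"
    and Gb': "\<And>s. s \<in> {0<..b} \<Longrightarrow> norm (G' s) \<le> A' * s\<^sup>2 + B' * s powr k"
    and t: "t \<in> {0<..b}"
  shows "Kop l G t - Kop l G' t = Kop l (\<lambda>s. G s - G' s) t"
proof -
  have sub: "{0..t} \<subseteq> {0..b}" using t by auto
  have i1: "(\<lambda>s. if s = 0 then 0 else pw s (-l-1) * G s) integrable_on {0..t}"
    by (rule integrable_continuous_real[OF continuous_on_subset[OF Kop_F_cont[OF l k b Gc Gb] sub]])
  have i2: "(\<lambda>s. if s = 0 then 0 else pw s (-l-1) * G' s) integrable_on {0..t}"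
    by (rule integrable_continuous_real[OF continuous_on_subset[OF Kop_F_cont[OF l k b Gc' Gb'] sub]])
  have "(\<lambda>s. if s = 0 then 0 else pw s (-l-1) * (G s - G' s)) =
        (\<lambda>s. (if s = 0 then 0 else pw s (-l-1) * G s) - (if s = 0 then 0 else pw s (-l-1) * G' s))"
    by (auto simp: algebra_simps)
  then show ?thesis
    unfolding Kop_def using integral_diff[OF i1 i2] by (simp add: right_diff_distrib[symmetric])
qed

lemma Kop_props:
  fixes l :: complex and G :: "real \<Rightarrow> complex"
  assumes l: "Re l \<le> 0" and t1: "0 < t1" and k: "2 \<le> k" and b: "0 < b" and A: "0 \<le> A" and B: "0 \<le> B"
    and Gc: "continuous_on {0<..b} G"
    and Gb: "\<And>s. s \<in> {0<..b} \<Longrightarrow> norm (G s) \<le> A * s\<^sup>2 + B * (t1 powr (2-k) * s powr k)"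
  shows Kop_bound: "\<And>t. t \<in> {0<..b} \<Longrightarrow> norm (Kop l G t) \<le> (A/(2-Re l) + B/(k - Re l)) * W t1 k t"
    and Kop_deriv: "\<And>t. t \<in> {0<..b} \<Longrightarrow>
        (Kop l G has_vector_derivative ((l * Kop l G t + G t) / of_real t)) (at t within {0<..b})"
proof -
  define F where "F = (\<lambda>s. if s = 0 then 0 else pw s (-l-1) * G s)"
  define C where "C = B * t1 powr (2-k)"
  have C: "C \<ge> 0" using B by (simp add: C_def)
  define g where "g = (\<lambda>s. A * s powr (1 - Re l) + C * s powr (k - 1 - Re l))"
  have Fb: "norm (F s) \<le> g s" if s: "s \<in> {0..b}" for s
  proof (cases "s = 0")
    case True then show ?thesis by (simp add: F_def g_def)
  next
    case False
    then have sp: "s > 0" using s by auto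
    have "norm (F s) = s powr (- Re l - 1) * norm (G s)"
      using sp by (simp add: F_def norm_mult pw_norm)
    also have "\<dots> \<le> s powr (- Re l - 1) * (A * s\<^sup>2 + B * (t1 powr (2-k) * s powr k))"
      using Gb[of s] sp s by (intro mult_left_mono) auto
    also have "\<dots> = A * (s powr (- Re l - 1) * s\<^sup>2) + C * (s powr (- Re l - 1) * s powr k)"
      by (simp add: C_def algebra_simps)
    also have "\<dots> = g s"
    proof -
      have e1: "s powr (- Re l - 1) * s\<^sup>2 = s powr (1 - Re l)"
        using pm2[OF sp, of "- Re l - 1"] by (simp add: algebra_simps)
      have e2: "s powr (- Re l - 1) * s powr k = s powr (k - 1 - Re l)"
        using pmk[OF sp, of "- Re l - 1" k] by (simp add: algebra_simps)
      show ?thesis by (simp add: e1 e2 g_def)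
    qed
    finally show ?thesis .
  qed
  have gt: "(g \<longlongrightarrow> 0) (at_right 0)"
  proof -
    have "((\<lambda>s. A * s powr (1 - Re l) + C * s powr (k - 1 - Re l)) \<longlongrightarrow> A * 0 + C * 0) (at_right 0)"
      using l k by (intro tendsto_intros powr_tendsto_0_right) auto
    then show ?thesis by (simp add: g_def)
  qed
  have Fc: "continuous_on {0..b} F"
    unfolding F_def
  proof (rule cont_ext0[OF b _ _ gt])
    show "continuous_on {0<..b} (\<lambda>s. pw s (- l - 1) * G s)"
      by (intro continuous_intros Gc continuous_on_subset[OF pw_cont]) auto
    show "norm (pw s (- l - 1) * G s) \<le> g s" if "s \<in> {0<..b}" for s
      using Fb[of s] that by (auto simp: F_def)
  qed
  show "norm (Kop l G t) \<le> (A/(2-Re l) + B/(k - Re l)) * W t1 k t" if t: "t \<in> {0<..b}" for t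
  proof -
    have tp: "t > 0" using t by auto
    have sub: "{0..t} \<subseteq> {0..b}" using t by auto
    have Fi: "F integrable_on {0..t}"
      by (rule integrable_continuous_real[OF continuous_on_subset[OF Fc sub]])
    have gi: "(g has_integral (A * (t powr (2 - Re l) / (2 - Re l)) + C * (t powr (k - Re l) / (k - Re l)))) {0..t}"
    proof -
      have 1: "((\<lambda>s. s powr (1 - Re l)) has_integral (t powr (1 - Re l + 1) / (1 - Re l + 1))) {0..t}"
        using l tp by (intro has_integral_powr_from_0) auto
      have 2: "((\<lambda>s. s powr (k - 1 - Re l)) has_integral (t powr (k - 1 - Re l + 1) / (k - 1 - Re l + 1))) {0..t}"
        using l tp k by (intro has_integral_powr_from_0) auto
      show ?thesis unfolding g_def
        using has_integral_add[OF has_integral_mult_right[OF 1, of A] has_integral_mult_right[OF 2, of C]]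
        by (simp add: algebra_simps)
    qed
    have "norm (integral {0..t} F) \<le> integral {0..t} g"
      using Fi gi Fb sub by (intro integral_norm_bound_integral) auto
    also have "\<dots> = A * (t powr (2 - Re l) / (2 - Re l)) + C * (t powr (k - Re l) / (k - Re l))"
      using gi by (rule integral_unique)
    finally have I: "norm (integral {0..t} F) \<le> A * (t powr (2 - Re l) / (2 - Re l)) + C * (t powr (k - Re l) / (k - Re l))" .
    have "norm (Kop l G t) = t powr Re l * norm (integral {0..t} F)"
      using tp by (simp add: Kop_def F_def norm_mult pw_norm)
    also have "\<dots> \<le> t powr Re l * (A * (t powr (2 - Re l) / (2 - Re l)) + C * (t powr (k - Re l) / (k - Re l)))"
      by (intro mult_left_mono I) auto
    also have "\<dots> = A / (2 - Re l) * (t powr Re l * t powr (2 - Re l)) + C / (k - Re l) * (t powr Re l * t powr (k - Re l))"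
      by (simp add: algebra_simps)
    also have "\<dots> = A / (2 - Re l) * t\<^sup>2 + B / (k - Re l) * (t1 powr (2-k) * t powr k)"
    proof -
      have e1: "t powr Re l * t powr (2 - Re l) = t\<^sup>2"
        using pmk[OF tp, of "Re l" "2 - Re l"] tp by (simp add: powr_numeral)
      have e2: "t powr Re l * t powr (k - Re l) = t powr k"
        using pmk[OF tp, of "Re l" "k - Re l"] by simp
      show ?thesis by (simp add: e1 e2 C_def)
    qed
    also have "\<dots> \<le> A / (2 - Re l) * W t1 k t + B / (k - Re l) * W t1 k t"
      using A B l k by (intro add_mono mult_left_mono) (auto simp: W_def)
    finally show ?thesis by (simp add: algebra_simps)
  qed
  show "(Kop l G has_vector_derivative ((l * Kop l G t + G t) / of_real t)) (at t within {0<..b})"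
    if t: "t \<in> {0<..b}" for t
  proof -
    have tp: "t > 0" using t by auto
    have I: "((\<lambda>u. integral {0..u} F) has_vector_derivative F t) (at t within {0<..b})"
      by (rule has_vector_derivative_within_subset[OF integral_has_vector_derivative[OF Fc]]) (use t in auto)
    have P: "((\<lambda>x. pw x l) has_vector_derivative (l * pw t l / of_real t)) (at t within {0<..b})"
      using tp by (rule pw_deriv)
    have "((\<lambda>u. pw u l * integral {0..u} F) has_vector_derivative
        (pw t l * F t + l * pw t l / of_real t * integral {0..t} F)) (at t within {0<..b})"
      by (rule has_vector_derivative_mult[OF P I])
    moreover have "pw t l * F t + l * pw t l / of_real t * integral {0..t} F = (l * Kop l G t + G t) / of_real t"
    proof -
      have pp: "pw t l * pw t (-l-1) = pw t (-1)" by (simp add: pw_add)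
      have "pw t l * F t = pw t (-1) * G t"
        using tp by (simp add: F_def pp mult.assoc[symmetric])
      then show ?thesis using tp by (simp add: Kop_def F_def pw_minus1 field_simps)
    qed
    moreover have "Kop l G = (\<lambda>u. pw u l * integral {0..u} F)"
      by (rule ext) (simp add: Kop_def F_def)
    ultimately show ?thesis by simp
  qed
qed



lemma cos_ge_quad: "cos (x::real) \<ge> 1 - x\<^sup>2 / 2"
proof -
  have "cos x = 1 - 2 * (sin (x/2))\<^sup>2"
    using cos_double_sin[of "x/2"] by simp
  moreover have "(sin (x/2))\<^sup>2 \<le> (x/2)\<^sup>2"
    using abs_sin_x_le_abs_x[of "x/2"] by (metis abs_ge_zero power2_abs power_mono)
  ultimately show ?thesis by (simp add: power_divide)
qed

lemma sin_ge_cubic: assumes "(x::real) \<ge> 0" shows "sin x \<ge> x - x ^ 3 / 6"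
proof -
  have "(\<lambda>x. sin x - x + x ^ 3 / 6) 0 \<le> (\<lambda>x. sin x - x + x ^ 3 / 6) x"
  proof (rule DERIV_nonneg_imp_nondecreasing[OF assms])
    fix y assume "0 \<le> y" "y \<le> x"
    show "\<exists>y'. ((\<lambda>x. sin x - x + x ^ 3 / 6) has_real_derivative y') (at y) \<and> 0 \<le> y'"
    proof (rule exI[of _ "cos y - 1 + y\<^sup>2 / 2"], rule conjI)
      show "((\<lambda>x. sin x - x + x ^ 3 / 6) has_real_derivative cos y - 1 + y\<^sup>2 / 2) (at y)"
        by (auto intro!: derivative_eq_intros simp: power2_eq_square field_simps)
      show "0 \<le> cos y - 1 + y\<^sup>2 / 2" using cos_ge_quad[of y] by linarith
    qed
  qed
  then show ?thesis by simp
qed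

locale P =
  fixes N :: nat and p :: real
  assumes N3: "N \<ge> 3" and pS: "p > (real N + 2) / (real N - 2)"
begin

definition "mu = 2 / (p - 1)"
definition "d = real N - 2 - mu"
definition "a = (mu * d) powr (mu / 2)"
definition "c0 = p * a powr (p - 1)"
definition "b0 = d - mu"
definition "sq0 = csqrt (of_real (b0\<^sup>2 - 8 * d))"
definition "lam1 = (- of_real b0 + sq0) / 2"
definition "lam2 = (- of_real b0 - sq0) / 2"
definition "h s = (sin s / s) ^ (N - 1)"

lemma Ngt2: "real N - 2 > 0" using N3 by simp

lemma p_gt1: "p > 1"
proof -
  have "(real N + 2) / (real N - 2) > 1" using Ngt2 by (simp add: field_simps)
  then show ?thesis using pS by linarith
qed

lemma mu_pos: "mu > 0" using p_gt1 by (simp add: mu_def)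

lemma mu_p: "mu * p = mu + 2" using p_gt1 by (simp add: mu_def field_simps)

lemma mu_pm1: "mu * (p - 1) = 2" using p_gt1 by (simp add: mu_def field_simps)

lemma mu_small: "2 * mu < real N - 2"
proof -
  have "p - 1 > 4 / (real N - 2)"
    using pS Ngt2 by (simp add: field_simps)
  then have "4 / (p - 1) < real N - 2"
    using p_gt1 Ngt2 by (simp add: field_simps)
  then show ?thesis by (simp add: mu_def)
qed

lemma d_pos: "d > 0" using mu_small mu_pos by (simp add: d_def)
lemma b0_pos: "b0 > 0" using mu_small by (simp add: b0_def d_def)
lemma a_pos: "a > 0" using mu_pos d_pos by (simp add: a_def)

lemma a_pm1: "a powr (p - 1) = mu * d"
proof -
  have "a powr (p - 1) = (mu * d) powr (mu / 2 * (p - 1))"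
    by (simp add: a_def powr_powr)
  also have "mu / 2 * (p - 1) = 1" using mu_pm1 by simp
  finally show ?thesis using mu_pos d_pos by simp
qed

lemma a_p: "a powr p = a * (mu * d)"
proof -
  have "a powr p = a powr (1 + (p - 1))" by simp
  also have "\<dots> = a powr 1 * a powr (p - 1)" by (rule powr_add)
  also have "a powr 1 = a" using a_pos by simp
  finally show ?thesis using a_pm1 by simp
qed

lemma c0_eq: "c0 = p * (mu * d)" by (simp add: c0_def a_pm1)

lemma lam_sum: "lam1 + lam2 = - of_real b0"
  by (simp add: lam1_def lam2_def field_simps)

lemma lam1_eq: "lam1\<^sup>2 + of_real b0 * lam1 + of_real (2 * d) = 0"
proof -
  have s: "sq0\<^sup>2 = of_real (b0\<^sup>2 - 8 * d)" by (simp add: sq0_def)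
  show ?thesis unfolding lam1_def
    by (simp add: power2_eq_square field_simps s[unfolded power2_eq_square])
qed

lemma Re_csq0: "Re (csqrt (of_real (b0\<^sup>2 - 8 * d))) \<le> b0"
proof (cases "b0\<^sup>2 - 8 * d \<ge> 0")
  case True
  then have "Re (csqrt (of_real (b0\<^sup>2 - 8 * d))) = sqrt (b0\<^sup>2 - 8 * d)"
    by (simp add: csqrt_of_real)
  also have "\<dots> \<le> sqrt (b0\<^sup>2)" using d_pos by (intro real_sqrt_le_mono) auto
  finally show ?thesis using b0_pos by simp
next
  case False
  then show ?thesis using b0_pos by simp
qed

lemma Re_csq: "Re sq0 \<le> b0"
  unfolding sq0_def by (rule Re_csq0)

lemma Re_sq0: "Re sq0 \<ge> 0"
  unfolding sq0_def by (rule Re_csqrt)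

lemma Re_lam1: "Re lam1 \<le> 0"
proof -
  have "Re lam1 = (- b0 + Re sq0) / 2" by (simp add: lam1_def)
  then show ?thesis using Re_csq by simp
qed

lemma Re_lam2: "Re lam2 \<le> 0"
proof -
  have "Re lam2 = (- b0 - Re sq0) / 2" by (simp add: lam2_def)
  then show ?thesis using Re_sq0 b0_pos by simp
qed

lemma h_pos: "0 < s \<Longrightarrow> s < pi \<Longrightarrow> h s > 0"
  by (simp add: h_def sin_gt_zero)

lemma h_le1: "0 < s \<Longrightarrow> s < pi \<Longrightarrow> h s \<le> 1"
  unfolding h_def using sin_x_le_x[of s] sin_gt_zero[of s]
  by (intro power_le_one) auto

lemma h_cont: "continuous_on {0<..<pi} h"
  unfolding h_def by (intro continuous_intros) auto

lemma h_lower: assumes "0 < s" "s \<le> 1" shows "h s \<ge> 1 - real (N - 1) * s\<^sup>2 / 6"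
proof -
  have "sin s / s \<ge> 1 - s\<^sup>2 / 6"
    using sin_ge_cubic[of s] assms by (simp add: field_simps power2_eq_square power3_eq_cube)
  moreover have "1 - s\<^sup>2 / 6 \<ge> 0"
  proof -
    have "s\<^sup>2 \<le> 1" using assms by (simp add: power_le_one)
    then show ?thesis by simp
  qed
  ultimately have "(sin s / s) ^ (N - 1) \<ge> (1 - s\<^sup>2 / 6) ^ (N - 1)"
    by (intro power_mono) auto
  moreover have "(1 + (- s\<^sup>2 / 6)) ^ (N - 1) \<ge> 1 + real (N - 1) * (- s\<^sup>2 / 6)"
  proof (rule Bernoulli_inequality)
    have "s\<^sup>2 \<le> 1" using assms by (simp add: power_le_one)
    then show "- 1 \<le> - s\<^sup>2 / 6" by simp
  qed
  ultimately show ?thesis by (simp add: h_def)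
qed

lemma h_inv_bound: assumes "0 < s" "s \<le> 1" "real (N - 1) * s\<^sup>2 \<le> 1"
  shows "\<bar>1 / h s - 1\<bar> \<le> real (N - 1) / 5 * s\<^sup>2"
proof -
  have spi: "s < pi" using assms pi_gt3 by linarith
  have hl: "h s \<ge> 1 - real (N - 1) * s\<^sup>2 / 6" by (rule h_lower[OF assms(1,2)])
  have h1: "h s \<le> 1" by (rule h_le1[OF assms(1) spi])
  have hp: "h s \<ge> 5/6" using hl assms(3) by linarith
  have "\<bar>1 / h s - 1\<bar> = (1 - h s) / h s" using hp h1 by (simp add: field_simps)
  also have "\<dots> \<le> (real (N - 1) * s\<^sup>2 / 6) / (5/6)"
    using hp hl h1 by (intro frac_le) auto
  finally show ?thesis by simp
qed

end


definition fcl :: "real \<Rightarrow> real \<Rightarrow> real \<Rightarrow> real" where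
  "fcl Ym p y = (max 0 (min y Ym)) powr p"

locale Q = P +
  fixes Ym t1 t2 kap del r e1 e2 H L2 F1 F1f F2 F2f :: real
  assumes t1: "0 < t1" "t1 < t2" "t2 < pi"
    and kap: "2 \<le> kap"
    and del: "0 < del" "del \<le> a / 2" "del \<le> mu * a / 2"
    and rr: "0 < r" "r * t1\<^sup>2 \<le> del"
    and nonneg: "0 \<le> e1" "0 \<le> e2" "0 \<le> H" "0 \<le> L2" "0 \<le> F1" "0 \<le> F1f" "0 \<le> F2" "0 \<le> F2f"
    and Ym: "3 * a / 2 \<le> Ym" "pi powr mu * t1 powr (- mu) * (3 * a / 2) \<le> Ym"
    and he1: "\<And>s. s \<in> {0<..t1} \<Longrightarrow> \<bar>1 / h s - 1\<bar> \<le> e1"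
    and hH: "\<And>s. s \<in> {0<..t2} \<Longrightarrow> \<bar>1 / h s - 1\<bar> \<le> H"
    and near: "\<And>s x y. s \<in> {0<..t1} \<Longrightarrow> \<bar>x\<bar> \<le> del \<Longrightarrow> \<bar>y\<bar> \<le> del \<Longrightarrow>
       \<bar>(c0 * x - h s * fcl Ym p (a + x)) - (c0 * y - h s * fcl Ym p (a + y))\<bar> \<le> e2 * \<bar>x - y\<bar>"
    and far: "\<And>s x y. s \<in> {0<..t2} \<Longrightarrow>
       \<bar>(c0 * x - h s * fcl Ym p (a + x)) - (c0 * y - h s * fcl Ym p (a + y))\<bar> \<le> L2 * \<bar>x - y\<bar>"
    and FF1: "\<And>s. s \<in> {0<..t2} \<Longrightarrow> mu * a * \<bar>1 / h s - 1\<bar> \<le> F1 * s\<^sup>2 + F1f * (t1 powr (2 - kap) * s powr kap)"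
    and FF2: "\<And>s. s \<in> {0<..t2} \<Longrightarrow> \<bar>a powr p - h s * fcl Ym p a\<bar> \<le> F2 * s\<^sup>2 + F2f * (t1 powr (2 - kap) * s powr kap)"
    and contr: "(1 + cmod (lam1 - mu)) *
        (((e2 + cmod (lam1 - mu) * e1) / (2 - Re lam2) + (L2 + cmod (lam1 - mu) * H) / (kap - Re lam2) + e1) / (2 - Re lam1)
        + ((e2 + cmod (lam1 - mu) * e1) / (2 - Re lam2) + (L2 + cmod (lam1 - mu) * H) / (kap - Re lam2) + H) / (kap - Re lam1))
        + ((e2 + cmod (lam1 - mu) * e1) / (2 - Re lam2) + (L2 + cmod (lam1 - mu) * H) / (kap - Re lam2)) \<le> 1/2"
    and inv: "(1 + cmod (lam1 - mu)) *
        (((F2 + cmod (lam1 - mu) * F1) / (2 - Re lam2) + (F2f + cmod (lam1 - mu) * F1f) / (kap - Re lam2) + F1) / (2 - Re lam1)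
        + ((F2 + cmod (lam1 - mu) * F1) / (2 - Re lam2) + (F2f + cmod (lam1 - mu) * F1f) / (kap - Re lam2) + F1f) / (kap - Re lam1))
        + ((F2 + cmod (lam1 - mu) * F1) / (2 - Re lam2) + (F2f + cmod (lam1 - mu) * F1f) / (kap - Re lam2)) \<le> r/2"
    and zero: "(cot t1 - cot t2) * (t1 powr d * mu * a / 2) > t1 powr (- mu) * (3 * a / 2)"
begin

definition "m = cmod (lam1 - of_real mu)"
definition "g1 s (x::complex) = (Im x - mu * a) * (1 / h s - 1)"
definition "g2 s (x::complex) = a powr p + c0 * Re x - h s * fcl Ym p (a + Re x)"
definition "G2 s x = complex_of_real (g2 s x) - (lam1 - of_real mu) * complex_of_real (g1 s x)"
definition "WW = W t1 kap"
definition "xi (Phi :: real \<Rightarrow>\<^sub>C complex) s = apply_bcontfun Phi (ln s) * complex_of_real (WW s)"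
definition "eta2 Phi = Kop lam2 (\<lambda>s. G2 s (xi Phi s))"
definition "eta1 Phi = Kop lam1 (\<lambda>s. eta2 Phi s + complex_of_real (g1 s (xi Phi s)))"
definition "out Phi s = complex_of_real (Re (eta1 Phi s)) + \<i> * complex_of_real (Re (eta2 Phi s + (lam1 - of_real mu) * eta1 Phi s))"
definition "cl t = exp (min t (ln t2))"
definition "Tf Phi t = out Phi (cl t) / complex_of_real (WW (cl t))"

lemma t2pos: "0 < t2" using t1 by simp

lemma WW_pos: "s > 0 \<Longrightarrow> WW s > 0"
  by (simp add: WW_def W_def less_max_iff_disj)

lemma WW_cont: "continuous_on {0<..} WW"
  unfolding WW_def W_def by (intro continuous_intros) auto

lemma WW_le: "s > 0 \<Longrightarrow> WW s \<le> s\<^sup>2 + t1 powr (2 - kap) * s powr kap"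
  using t1 by (simp add: WW_def W_def)

lemma WW_near: assumes "0 < s" "s \<le> t1" shows "WW s = s\<^sup>2"
proof -
  have "t1 powr (2 - kap) * s powr kap = s\<^sup>2 * (s / t1) powr (kap - 2)"
    using assms t1 by (simp add: powr_diff powr_divide powr_minus field_simps powr_numeral)
  also have "\<dots> \<le> s\<^sup>2 * 1"
  proof (intro mult_left_mono)
    have "(s / t1) powr (kap - 2) \<le> 1 powr (kap - 2)"
      using assms kap t1 by (intro powr_mono2) auto
    then show "(s / t1) powr (kap - 2) \<le> 1" by simp
  qed auto
  finally show ?thesis by (simp add: WW_def W_def)
qed

lemma WW_far: assumes "t1 \<le> s" shows "WW s = t1 powr (2 - kap) * s powr kap"
proof -
  have sp: "s > 0" using assms t1 by simp
  have "s\<^sup>2 * 1 \<le> s\<^sup>2 * (s / t1) powr (kap - 2)"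
    using assms kap t1 by (intro mult_left_mono ge_one_powr_ge_zero) auto
  also have "\<dots> = t1 powr (2 - kap) * s powr kap"
    using sp t1 by (simp add: powr_diff powr_divide powr_minus field_simps powr_numeral)
  finally show ?thesis by (simp add: WW_def W_def)
qed

lemma WW_far_ge: assumes "t1 \<le> s" shows "t1\<^sup>2 \<le> t1 powr (2 - kap) * s powr kap"
proof -
  have "t1\<^sup>2 \<le> s\<^sup>2" using assms t1 by (intro power_mono) auto
  also have "\<dots> \<le> WW s" using t1 assms by (simp add: WW_def W_def)
  finally show ?thesis using WW_far[OF assms] by simp
qed

lemma xi_norm: "s > 0 \<Longrightarrow> norm (xi Phi s) \<le> norm Phi * WW s"
  unfolding xi_def using WW_pos[of s] norm_bounded[of Phi "ln s"]
  by (simp add: norm_mult mult_right_mono)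

lemma xi_dist: "s > 0 \<Longrightarrow> norm (xi Phi s - xi Psi s) \<le> dist Phi Psi * WW s"
proof -
  assume s: "s > 0"
  have "norm (xi Phi s - xi Psi s) = norm (apply_bcontfun Phi (ln s) - apply_bcontfun Psi (ln s)) * WW s"
    unfolding xi_def using WW_pos[OF s] by (simp add: left_diff_distrib[symmetric] norm_mult)
  also have "\<dots> \<le> dist Phi Psi * WW s"
    using dist_bounded[of Phi "ln s" Psi] WW_pos[OF s] by (intro mult_right_mono) (auto simp: dist_norm)
  finally show ?thesis .
qed

lemma xi_cont: "continuous_on {0<..} (xi Phi)"
  unfolding xi_def
  by (intro continuous_intros continuous_on_compose2[OF continuous_on_apply_bcontfun[of UNIV Phi]] continuous_on_subset[OF WW_cont]) auto

lemma Kop_cong: "(\<And>x. x \<in> {0<..s} \<Longrightarrow> G x = G' x) \<Longrightarrow> Kop l G s = Kop l G' s"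
  unfolding Kop_def by (intro arg_cong[where f="\<lambda>u. pw s l * u"] integral_cong) auto

lemma KB:
  fixes G :: "real \<Rightarrow> complex"
  assumes l: "Re l \<le> 0" and Gc: "continuous_on {0<..t2} G" and A: "0 \<le> A" and B: "0 \<le> B"
    and Gb: "\<And>s. s \<in> {0<..t2} \<Longrightarrow> norm (G s) \<le> A * s\<^sup>2 + B * (t1 powr (2 - kap) * s powr kap)"
  shows "\<forall>s\<in>{0<..t2}. norm (Kop l G s) \<le> (A / (2 - Re l) + B / (kap - Re l)) * WW s
         \<and> (Kop l G has_vector_derivative ((l * Kop l G s + G s) / of_real s)) (at s within {0<..t2})"
    and "continuous_on {0<..t2} (Kop l G)"
proof -
  note KP = Kop_props[OF l t1(1) kap t2pos A B Gc Gb]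
  have b: "norm (Kop l G s) \<le> (A / (2 - Re l) + B / (kap - Re l)) * WW s" if "s \<in> {0<..t2}" for s
    using KP(1)[OF _ that] by (simp add: WW_def)
  have D: "(Kop l G has_vector_derivative ((l * Kop l G s + G s) / of_real s)) (at s within {0<..t2})"
    if "s \<in> {0<..t2}" for s
    using KP(2)[OF _ that] by simp
  show "\<forall>s\<in>{0<..t2}. norm (Kop l G s) \<le> (A / (2 - Re l) + B / (kap - Re l)) * WW s
         \<and> (Kop l G has_vector_derivative ((l * Kop l G s + G s) / of_real s)) (at s within {0<..t2})"
    using b D by blast
  show "continuous_on {0<..t2} (Kop l G)"
    unfolding continuous_on_eq_continuous_within
    using D has_vector_derivative_continuous by blast
qed

lemma al_pos: "2 - Re lam1 > 0" "2 - Re lam2 > 0" "kap - Re lam1 > 0" "kap - Re lam2 > 0"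
  using Re_lam1 Re_lam2 kap by auto

lemma m_nonneg: "m \<ge> 0" by (simp add: m_def)

lemma chain:
  fixes G g :: "real \<Rightarrow> complex"
  assumes Gc: "continuous_on {0<..t2} G" and gc: "continuous_on {0<..t2} g"
    and A: "0 \<le> A" and B: "0 \<le> B" and Ag: "0 \<le> Ag" and Bg: "0 \<le> Bg"
    and Gb: "\<And>s. s \<in> {0<..t2} \<Longrightarrow> norm (G s) \<le> A * s\<^sup>2 + B * (t1 powr (2 - kap) * s powr kap)"
    and gb: "\<And>s. s \<in> {0<..t2} \<Longrightarrow> norm (g s) \<le> Ag * s\<^sup>2 + Bg * (t1 powr (2 - kap) * s powr kap)"
    and s: "s \<in> {0<..t2}"
  shows "norm (Re (Kop lam1 (\<lambda>s. Kop lam2 G s + g s) s)) +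
         norm (Re (Kop lam2 G s + (lam1 - of_real mu) * Kop lam1 (\<lambda>s. Kop lam2 G s + g s) s))
      \<le> ((1 + m) * (((A / (2 - Re lam2) + B / (kap - Re lam2)) + Ag) / (2 - Re lam1)
              + ((A / (2 - Re lam2) + B / (kap - Re lam2)) + Bg) / (kap - Re lam1))
          + (A / (2 - Re lam2) + B / (kap - Re lam2))) * WW s"
proof -
  define P2 where "P2 = A / (2 - Re lam2) + B / (kap - Re lam2)"
  define P1 where "P1 = (P2 + Ag) / (2 - Re lam1) + (P2 + Bg) / (kap - Re lam1)"
  have P2: "P2 \<ge> 0" unfolding P2_def using al_pos A B by simp
  have P1: "P1 \<ge> 0" unfolding P1_def using al_pos Ag Bg P2 by simp
  note K2 = KB[OF Re_lam2 Gc A B Gb]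
  have b2: "norm (Kop lam2 G x) \<le> P2 * WW x" if "x \<in> {0<..t2}" for x
    using K2(1) that by (simp add: P2_def)
  have G1c: "continuous_on {0<..t2} (\<lambda>s. Kop lam2 G s + g s)"
    by (intro continuous_intros K2(2) gc)
  have G1b: "norm (Kop lam2 G x + g x) \<le> (P2 + Ag) * x\<^sup>2 + (P2 + Bg) * (t1 powr (2 - kap) * x powr kap)"
    if x: "x \<in> {0<..t2}" for x
  proof -
    have "norm (Kop lam2 G x + g x) \<le> P2 * WW x + (Ag * x\<^sup>2 + Bg * (t1 powr (2 - kap) * x powr kap))"
      using norm_triangle_ineq[of "Kop lam2 G x" "g x"] b2[OF x] gb[OF x] by linarith
    also have "P2 * WW x \<le> P2 * (x\<^sup>2 + t1 powr (2 - kap) * x powr kap)"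
      using WW_le[of x] x P2 by (intro mult_left_mono) auto
    finally show ?thesis by (simp add: algebra_simps)
  qed
  have pa: "0 \<le> P2 + Ag" "0 \<le> P2 + Bg" using P2 Ag Bg by auto
  note K1 = KB[OF Re_lam1 G1c pa G1b]
  have b1: "norm (Kop lam1 (\<lambda>s. Kop lam2 G s + g s) s) \<le> P1 * WW s"
    using K1(1) s by (simp add: P1_def)
  have "norm (Re (Kop lam1 (\<lambda>s. Kop lam2 G s + g s) s)) +
         norm (Re (Kop lam2 G s + (lam1 - of_real mu) * Kop lam1 (\<lambda>s. Kop lam2 G s + g s) s))
       \<le> norm (Kop lam1 (\<lambda>s. Kop lam2 G s + g s) s) + (norm (Kop lam2 G s) + m * norm (Kop lam1 (\<lambda>s. Kop lam2 G s + g s) s))"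
  proof -
    have "norm (Re (Kop lam2 G s + (lam1 - of_real mu) * Kop lam1 (\<lambda>s. Kop lam2 G s + g s) s))
        \<le> norm (Kop lam2 G s + (lam1 - of_real mu) * Kop lam1 (\<lambda>s. Kop lam2 G s + g s) s)"
      by (simp only: real_norm_def abs_Re_le_cmod)
    also have "\<dots> \<le> norm (Kop lam2 G s) + m * norm (Kop lam1 (\<lambda>s. Kop lam2 G s + g s) s)"
      using norm_triangle_ineq[of "Kop lam2 G s" "(lam1 - of_real mu) * Kop lam1 (\<lambda>s. Kop lam2 G s + g s) s"]
      by (simp add: m_def norm_mult)
    finally show ?thesis using abs_Re_le_cmod[of "Kop lam1 (\<lambda>s. Kop lam2 G s + g s) s"] by simp
  qed
  also have "\<dots> \<le> P1 * WW s + (P2 * WW s + m * (P1 * WW s))"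
    using b1 b2[OF s] m_nonneg by (intro add_mono mult_left_mono) auto
  also have "\<dots> = ((1 + m) * P1 + P2) * WW s" by (simp add: algebra_simps)
  finally show ?thesis unfolding P1_def P2_def .
qed

lemma chain_scaled:
  fixes G g :: "real \<Rightarrow> complex"
  assumes Gc: "continuous_on {0<..t2} G" and gc: "continuous_on {0<..t2} g" and D: "0 \<le> D"
    and A: "0 \<le> A" and B: "0 \<le> B" and Ag: "0 \<le> Ag" and Bg: "0 \<le> Bg"
    and Gb: "\<And>s. s \<in> {0<..t2} \<Longrightarrow> norm (G s) \<le> (D * A) * s\<^sup>2 + (D * B) * (t1 powr (2 - kap) * s powr kap)"
    and gb: "\<And>s. s \<in> {0<..t2} \<Longrightarrow> norm (g s) \<le> (D * Ag) * s\<^sup>2 + (D * Bg) * (t1 powr (2 - kap) * s powr kap)"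
    and s: "s \<in> {0<..t2}"
  shows "norm (Re (Kop lam1 (\<lambda>s. Kop lam2 G s + g s) s)) +
         norm (Re (Kop lam2 G s + (lam1 - of_real mu) * Kop lam1 (\<lambda>s. Kop lam2 G s + g s) s))
      \<le> D * ((1 + m) * (((A / (2 - Re lam2) + B / (kap - Re lam2)) + Ag) / (2 - Re lam1)
              + ((A / (2 - Re lam2) + B / (kap - Re lam2)) + Bg) / (kap - Re lam1))
          + (A / (2 - Re lam2) + B / (kap - Re lam2))) * WW s"
proof -
  have e: "((1 + m) * ((((D*A) / (2 - Re lam2) + (D*B) / (kap - Re lam2)) + (D*Ag)) / (2 - Re lam1)
              + (((D*A) / (2 - Re lam2) + (D*B) / (kap - Re lam2)) + (D*Bg)) / (kap - Re lam1))
          + ((D*A) / (2 - Re lam2) + (D*B) / (kap - Re lam2)))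
        = D * ((1 + m) * (((A / (2 - Re lam2) + B / (kap - Re lam2)) + Ag) / (2 - Re lam1)
              + ((A / (2 - Re lam2) + B / (kap - Re lam2)) + Bg) / (kap - Re lam1))
          + (A / (2 - Re lam2) + B / (kap - Re lam2)))"
    by (simp add: algebra_simps add_divide_distrib[symmetric] diff_divide_distrib[symmetric] times_divide_eq_right)
  show ?thesis
    using chain[OF Gc gc mult_nonneg_nonneg[OF D A] mult_nonneg_nonneg[OF D B]
        mult_nonneg_nonneg[OF D Ag] mult_nonneg_nonneg[OF D Bg] Gb gb s]
    unfolding e .
qed

lemma h_cont2: "continuous_on {0<..t2} h"
  by (rule continuous_on_subset[OF h_cont]) (use t1 in auto)

lemma h_pos2: "s \<in> {0<..t2} \<Longrightarrow> h s > 0"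
  using t1 by (intro h_pos) auto

lemma fcl_cont: "continuous_on S (fcl Ym p)"
  unfolding fcl_def using p_gt1
  by (intro continuous_on_powr' continuous_intros) auto

lemma g1_cont: "continuous_on {0<..t2} f \<Longrightarrow> continuous_on {0<..t2} (\<lambda>s. g1 s (f s))"
  unfolding g1_def using h_pos2
  by (intro continuous_intros h_cont2) (auto simp: less_imp_neq[symmetric])

lemma g2_cont: "continuous_on {0<..t2} f \<Longrightarrow> continuous_on {0<..t2} (\<lambda>s. g2 s (f s))"
  unfolding g2_def
  by (intro continuous_intros h_cont2 continuous_on_compose2[OF fcl_cont[of UNIV]]) auto

lemma G2_cont: "continuous_on {0<..t2} f \<Longrightarrow> continuous_on {0<..t2} (\<lambda>s. G2 s (f s))"
  unfolding G2_def by (intro continuous_intros g1_cont g2_cont)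

lemma g1_lip: "\<bar>g1 s x - g1 s y\<bar> \<le> \<bar>1 / h s - 1\<bar> * cmod (x - y)"
proof -
  have "\<bar>g1 s x - g1 s y\<bar> = \<bar>Im (x - y)\<bar> * \<bar>1 / h s - 1\<bar>"
    by (simp add: g1_def left_diff_distrib[symmetric] abs_mult)
  also have "\<dots> \<le> cmod (x - y) * \<bar>1 / h s - 1\<bar>"
    by (intro mult_right_mono abs_Im_le_cmod) auto
  finally show ?thesis by (simp add: mult.commute)
qed

lemma g1_lipH: "s \<in> {0<..t2} \<Longrightarrow> \<bar>g1 s x - g1 s y\<bar> \<le> H * cmod (x - y)"
  using g1_lip[of s x y] hH[of s] by (meson mult_right_mono norm_ge_zero order.trans)

lemma g1_lipe1: "s \<in> {0<..t1} \<Longrightarrow> \<bar>g1 s x - g1 s y\<bar> \<le> e1 * cmod (x - y)"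
  using g1_lip[of s x y] he1[of s] by (meson mult_right_mono norm_ge_zero order.trans)

lemma g2_eq: "g2 s x - g2 s y = (c0 * Re x - h s * fcl Ym p (a + Re x)) - (c0 * Re y - h s * fcl Ym p (a + Re y))"
  by (simp add: g2_def)

lemma g2_far: "s \<in> {0<..t2} \<Longrightarrow> \<bar>g2 s x - g2 s y\<bar> \<le> L2 * cmod (x - y)"
  unfolding g2_eq using far[of s "Re x" "Re y"] abs_Re_le_cmod[of "x - y"] nonneg(4)
  by (smt (verit, ccfv_SIG) minus_complex.simps(1) mult_left_mono)

lemma g2_near: "s \<in> {0<..t1} \<Longrightarrow> cmod x \<le> del \<Longrightarrow> cmod y \<le> del \<Longrightarrow> \<bar>g2 s x - g2 s y\<bar> \<le> e2 * cmod (x - y)"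
  unfolding g2_eq using near[of s "Re x" "Re y"] abs_Re_le_cmod[of "x - y"] abs_Re_le_cmod[of x] abs_Re_le_cmod[of y] nonneg(2)
  by (smt (verit, ccfv_SIG) minus_complex.simps(1) mult_left_mono)

lemma G2_lip: "norm (G2 s x - G2 s y) \<le> \<bar>g2 s x - g2 s y\<bar> + m * \<bar>g1 s x - g1 s y\<bar>"
proof -
  have "G2 s x - G2 s y = of_real (g2 s x - g2 s y) - (lam1 - of_real mu) * of_real (g1 s x - g1 s y)"
    by (simp add: G2_def algebra_simps)
  then show ?thesis
    using norm_triangle_ineq4[of "of_real (g2 s x - g2 s y)" "(lam1 - of_real mu) * of_real (g1 s x - g1 s y)"]
    by (simp add: norm_mult m_def del: of_real_diff)
qed

lemma g1_0: "s \<in> {0<..t2} \<Longrightarrow> \<bar>g1 s 0\<bar> \<le> F1 * s\<^sup>2 + F1f * (t1 powr (2 - kap) * s powr kap)"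
  using FF1[of s] mu_pos a_pos by (simp add: g1_def abs_mult)

lemma G2_0: "s \<in> {0<..t2} \<Longrightarrow> norm (G2 s 0) \<le> (F2 + m * F1) * s\<^sup>2 + (F2f + m * F1f) * (t1 powr (2 - kap) * s powr kap)"
proof -
  assume s: "s \<in> {0<..t2}"
  have "norm (G2 s 0) \<le> \<bar>g2 s 0\<bar> + m * \<bar>g1 s 0\<bar>"
    using norm_triangle_ineq4[of "of_real (g2 s 0)" "(lam1 - of_real mu) * of_real (g1 s 0)"]
    by (simp add: G2_def norm_mult m_def)
  also have "\<dots> \<le> (F2 * s\<^sup>2 + F2f * (t1 powr (2 - kap) * s powr kap)) + m * (F1 * s\<^sup>2 + F1f * (t1 powr (2 - kap) * s powr kap))"
    using FF2[OF s] g1_0[OF s] m_nonneg by (intro add_mono mult_left_mono) (auto simp: g2_def)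
  finally show ?thesis by (simp add: algebra_simps)
qed

lemma xi_cont2: "continuous_on {0<..t2} (xi Phi)"
  by (rule continuous_on_subset[OF xi_cont]) auto

lemma xi_le: "s \<in> {0<..t2} \<Longrightarrow> norm (xi Phi s) \<le> norm Phi * (s\<^sup>2 + t1 powr (2 - kap) * s powr kap)"
  using xi_norm[of s Phi] WW_le[of s] by (smt (verit) greaterThanAtMost_iff mult_left_mono norm_ge_zero)

definition "AG Phi = F2 + m * F1 + (L2 + m * H) * norm Phi"
definition "BG Phi = F2f + m * F1f + (L2 + m * H) * norm Phi"
definition "Ag1 Phi = F1 + H * norm Phi"
definition "Bg1 Phi = F1f + H * norm Phi"

lemma AB_nonneg: "0 \<le> AG Phi" "0 \<le> BG Phi" "0 \<le> Ag1 Phi" "0 \<le> Bg1 Phi"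
  using nonneg m_nonneg by (auto simp: AG_def BG_def Ag1_def Bg1_def)

lemma G2Phi_bound: assumes s: "s \<in> {0<..t2}"
  shows "norm (G2 s (xi Phi s)) \<le> AG Phi * s\<^sup>2 + BG Phi * (t1 powr (2 - kap) * s powr kap)"
proof -
  have "norm (G2 s (xi Phi s)) \<le> norm (G2 s 0) + norm (G2 s (xi Phi s) - G2 s 0)"
    by (metis add_diff_cancel_left' norm_triangle_ineq add.commute diff_add_cancel)
  also have "norm (G2 s (xi Phi s) - G2 s 0) \<le> \<bar>g2 s (xi Phi s) - g2 s 0\<bar> + m * \<bar>g1 s (xi Phi s) - g1 s 0\<bar>"
    by (rule G2_lip)
  also have "\<dots> \<le> L2 * norm (xi Phi s) + m * (H * norm (xi Phi s))"
    using g2_far[OF s, of "xi Phi s" 0] g1_lipH[OF s, of "xi Phi s" 0] m_nonneg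
    by (intro add_mono mult_left_mono) auto
  also have "\<dots> = (L2 + m * H) * norm (xi Phi s)" by (simp add: algebra_simps)
  also have "\<dots> \<le> (L2 + m * H) * (norm Phi * (s\<^sup>2 + t1 powr (2 - kap) * s powr kap))"
    using xi_le[OF s, of Phi] nonneg m_nonneg by (intro mult_left_mono) auto
  finally show ?thesis using G2_0[OF s] by (simp add: AG_def BG_def algebra_simps)
qed

lemma g1Phi_bound: assumes s: "s \<in> {0<..t2}"
  shows "norm (complex_of_real (g1 s (xi Phi s))) \<le> Ag1 Phi * s\<^sup>2 + Bg1 Phi * (t1 powr (2 - kap) * s powr kap)"
proof -
  have "\<bar>g1 s (xi Phi s)\<bar> \<le> \<bar>g1 s 0\<bar> + \<bar>g1 s (xi Phi s) - g1 s 0\<bar>" by linarith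
  also have "\<bar>g1 s (xi Phi s) - g1 s 0\<bar> \<le> H * norm (xi Phi s)"
    using g1_lipH[OF s, of "xi Phi s" 0] by simp
  also have "\<dots> \<le> H * (norm Phi * (s\<^sup>2 + t1 powr (2 - kap) * s powr kap))"
    using xi_le[OF s, of Phi] nonneg by (intro mult_left_mono) auto
  finally show ?thesis using g1_0[OF s] by (simp add: Ag1_def Bg1_def algebra_simps)
qed

lemma G2Phi_cont: "continuous_on {0<..t2} (\<lambda>s. G2 s (xi Phi s))"
  by (rule G2_cont[OF xi_cont2])

lemma g1Phi_cont: "continuous_on {0<..t2} (\<lambda>s. complex_of_real (g1 s (xi Phi s)))"
  by (intro continuous_intros g1_cont[OF xi_cont2])

lemmas eta2_KB = KB[OF Re_lam2 G2Phi_cont AB_nonneg(1,2) G2Phi_bound, folded eta2_def]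

definition "E2 Phi = AG Phi / (2 - Re lam2) + BG Phi / (kap - Re lam2)"

lemma E2_nonneg: "E2 Phi \<ge> 0"
  unfolding E2_def using AB_nonneg[of Phi] al_pos by (intro add_nonneg_nonneg divide_nonneg_pos) auto

lemma G1Phi_cont: "continuous_on {0<..t2} (\<lambda>s. eta2 Phi s + complex_of_real (g1 s (xi Phi s)))"
  by (intro continuous_intros eta2_KB(2) g1Phi_cont)

lemma G1Phi_bound: assumes s: "s \<in> {0<..t2}"
  shows "norm (eta2 Phi s + complex_of_real (g1 s (xi Phi s))) \<le>
    (E2 Phi + Ag1 Phi) * s\<^sup>2 + (E2 Phi + Bg1 Phi) * (t1 powr (2 - kap) * s powr kap)"
proof -
  have "norm (eta2 Phi s + complex_of_real (g1 s (xi Phi s))) \<le> E2 Phi * WW s + (Ag1 Phi * s\<^sup>2 + Bg1 Phi * (t1 powr (2 - kap) * s powr kap))"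
    using norm_triangle_ineq[of "eta2 Phi s"] eta2_KB(1) s g1Phi_bound[OF s, of Phi]
    by (smt (verit) E2_def)
  also have "E2 Phi * WW s \<le> E2 Phi * (s\<^sup>2 + t1 powr (2 - kap) * s powr kap)"
    using WW_le[of s] s E2_nonneg by (intro mult_left_mono) auto
  finally show ?thesis by (simp add: algebra_simps)
qed

lemma G1_nonneg1: "0 \<le> E2 Phi + Ag1 Phi"
  using E2_nonneg[of Phi] AB_nonneg[of Phi] by auto
lemma G1_nonneg2: "0 \<le> E2 Phi + Bg1 Phi"
  using E2_nonneg[of Phi] AB_nonneg[of Phi] by auto

lemmas eta1_KB = KB[OF Re_lam1 G1Phi_cont G1_nonneg1 G1_nonneg2 G1Phi_bound, folded eta1_def]

lemma xi_small: assumes "norm Phi \<le> r" "s \<in> {0<..t1}" shows "norm (xi Phi s) \<le> del"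
proof -
  have "norm (xi Phi s) \<le> norm Phi * WW s" using xi_norm assms(2) by auto
  also have "\<dots> = norm Phi * s\<^sup>2" using WW_near assms(2) by auto
  also have "\<dots> \<le> r * t1\<^sup>2" using assms rr by (intro mult_mono power_mono) auto
  finally show ?thesis using rr by linarith
qed

lemma diff_G2_g1:
  assumes P: "norm Phi \<le> r" and Q: "norm Psi \<le> r" and s: "s \<in> {0<..t2}"
  shows "norm (G2 s (xi Phi s) - G2 s (xi Psi s)) \<le> (dist Phi Psi * (e2 + m * e1)) * s\<^sup>2 + (dist Phi Psi * (L2 + m * H)) * (t1 powr (2 - kap) * s powr kap)"
    and "norm (complex_of_real (g1 s (xi Phi s)) - complex_of_real (g1 s (xi Psi s))) \<le> (dist Phi Psi * e1) * s\<^sup>2 + (dist Phi Psi * H) * (t1 powr (2 - kap) * s powr kap)"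
proof -
  define D where "D = dist Phi Psi"
  have D0: "D \<ge> 0" by (simp add: D_def)
  have dx: "norm (xi Phi s - xi Psi s) \<le> D * WW s" using xi_dist s by (auto simp: D_def)
  have T0: "0 \<le> t1 powr (2 - kap) * s powr kap" by simp
  have "norm (G2 s (xi Phi s) - G2 s (xi Psi s)) \<le> (D * (e2 + m * e1)) * s\<^sup>2 + (D * (L2 + m * H)) * (t1 powr (2 - kap) * s powr kap)
      \<and> \<bar>g1 s (xi Phi s) - g1 s (xi Psi s)\<bar> \<le> (D * e1) * s\<^sup>2 + (D * H) * (t1 powr (2 - kap) * s powr kap)"
  proof (cases "s \<le> t1")
    case True
    then have s1: "s \<in> {0<..t1}" using s by auto
    have W: "WW s = s\<^sup>2" using WW_near s1 by auto
    have a1: "\<bar>g2 s (xi Phi s) - g2 s (xi Psi s)\<bar> \<le> e2 * (D * s\<^sup>2)"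
      using g2_near[OF s1 xi_small[OF P s1] xi_small[OF Q s1]] dx W nonneg(2)
      by (smt (verit) mult_left_mono)
    have a2: "\<bar>g1 s (xi Phi s) - g1 s (xi Psi s)\<bar> \<le> e1 * (D * s\<^sup>2)"
      using g1_lipe1[OF s1, of "xi Phi s" "xi Psi s"] dx W nonneg(1)
      by (smt (verit) mult_left_mono)
    have "norm (G2 s (xi Phi s) - G2 s (xi Psi s)) \<le> e2 * (D * s\<^sup>2) + m * (e1 * (D * s\<^sup>2))"
      using G2_lip[of s "xi Phi s" "xi Psi s"] a1 a2 m_nonneg
      by (smt (verit) mult_left_mono)
    also have "\<dots> \<le> (D * (e2 + m * e1)) * s\<^sup>2 + (D * (L2 + m * H)) * (t1 powr (2 - kap) * s powr kap)"
      using D0 nonneg m_nonneg T0 by (simp add: algebra_simps)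
    finally have b1: "norm (G2 s (xi Phi s) - G2 s (xi Psi s)) \<le> (D * (e2 + m * e1)) * s\<^sup>2 + (D * (L2 + m * H)) * (t1 powr (2 - kap) * s powr kap)" .
    have a2': "\<bar>g1 s (xi Phi s) - g1 s (xi Psi s)\<bar> \<le> (D * e1) * s\<^sup>2" using a2 by (simp add: algebra_simps)
    have "0 \<le> (D * H) * (t1 powr (2 - kap) * s powr kap)" using D0 nonneg by simp
    then show ?thesis using b1 a2' by linarith
  next
    case False
    have W: "WW s = t1 powr (2 - kap) * s powr kap" using WW_far False by auto
    have a1: "\<bar>g2 s (xi Phi s) - g2 s (xi Psi s)\<bar> \<le> L2 * (D * WW s)"
      using g2_far[OF s, of "xi Phi s" "xi Psi s"] dx nonneg(4)
      by (smt (verit) mult_left_mono)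
    have a2: "\<bar>g1 s (xi Phi s) - g1 s (xi Psi s)\<bar> \<le> H * (D * WW s)"
      using g1_lipH[OF s, of "xi Phi s" "xi Psi s"] dx nonneg(3)
      by (smt (verit) mult_left_mono)
    have "norm (G2 s (xi Phi s) - G2 s (xi Psi s)) \<le> L2 * (D * WW s) + m * (H * (D * WW s))"
      using G2_lip[of s "xi Phi s" "xi Psi s"] a1 a2 m_nonneg
      by (smt (verit) mult_left_mono)
    also have "\<dots> \<le> (D * (e2 + m * e1)) * s\<^sup>2 + (D * (L2 + m * H)) * (t1 powr (2 - kap) * s powr kap)"
      using D0 nonneg m_nonneg T0 by (simp add: W algebra_simps)
    finally have b1: "norm (G2 s (xi Phi s) - G2 s (xi Psi s)) \<le> (D * (e2 + m * e1)) * s\<^sup>2 + (D * (L2 + m * H)) * (t1 powr (2 - kap) * s powr kap)" .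
    have a2': "\<bar>g1 s (xi Phi s) - g1 s (xi Psi s)\<bar> \<le> (D * H) * (t1 powr (2 - kap) * s powr kap)" using a2 by (simp add: W algebra_simps)
    have "0 \<le> (D * e1) * s\<^sup>2" using D0 nonneg by simp
    then show ?thesis using b1 a2' by linarith
  qed
  then show "norm (G2 s (xi Phi s) - G2 s (xi Psi s)) \<le> (dist Phi Psi * (e2 + m * e1)) * s\<^sup>2 + (dist Phi Psi * (L2 + m * H)) * (t1 powr (2 - kap) * s powr kap)"
    and "norm (complex_of_real (g1 s (xi Phi s)) - complex_of_real (g1 s (xi Psi s))) \<le> (dist Phi Psi * e1) * s\<^sup>2 + (dist Phi Psi * H) * (t1 powr (2 - kap) * s powr kap)"
    by (auto simp: D_def simp flip: of_real_diff)
qed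

lemma bnd_form: "norm (G s) \<le> A * s\<^sup>2 + B * (t1 powr (2 - kap) * s powr kap) \<Longrightarrow>
   norm (G s) \<le> A * s\<^sup>2 + (B * t1 powr (2 - kap)) * s powr kap"
  by (simp add: algebra_simps)

lemma G2Phi_bound': "s \<in> {0<..t2} \<Longrightarrow> norm (G2 s (xi Phi s)) \<le> AG Phi * s\<^sup>2 + (BG Phi * t1 powr (2 - kap)) * s powr kap"
  using G2Phi_bound[of s Phi] by (simp add: algebra_simps)

lemma G1Phi_bound': "s \<in> {0<..t2} \<Longrightarrow> norm (eta2 Phi s + complex_of_real (g1 s (xi Phi s))) \<le>
    (E2 Phi + Ag1 Phi) * s\<^sup>2 + ((E2 Phi + Bg1 Phi) * t1 powr (2 - kap)) * s powr kap"
  using G1Phi_bound[of s Phi] by (simp add: algebra_simps)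

lemma eta2_diff: assumes s: "s \<in> {0<..t2}"
  shows "eta2 Phi s - eta2 Psi s = Kop lam2 (\<lambda>s. G2 s (xi Phi s) - G2 s (xi Psi s)) s"
  unfolding eta2_def
  by (rule Kop_diff[where G="\<lambda>s. G2 s (xi Phi s)" and G'="\<lambda>s. G2 s (xi Psi s)",
        OF Re_lam2 kap t2pos G2Phi_cont G2Phi_bound' G2Phi_cont G2Phi_bound' s])

lemma eta1_diff: assumes s: "s \<in> {0<..t2}"
  shows "eta1 Phi s - eta1 Psi s = Kop lam1 (\<lambda>s. Kop lam2 (\<lambda>s. G2 s (xi Phi s) - G2 s (xi Psi s)) s
      + (complex_of_real (g1 s (xi Phi s)) - complex_of_real (g1 s (xi Psi s)))) s"
proof -
  have "eta1 Phi s - eta1 Psi s = Kop lam1 (\<lambda>s. (eta2 Phi s + complex_of_real (g1 s (xi Phi s))) - (eta2 Psi s + complex_of_real (g1 s (xi Psi s)))) s"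
    unfolding eta1_def
    by (rule Kop_diff[where G="\<lambda>s. eta2 Phi s + complex_of_real (g1 s (xi Phi s))"
          and G'="\<lambda>s. eta2 Psi s + complex_of_real (g1 s (xi Psi s))",
        OF Re_lam1 kap t2pos G1Phi_cont G1Phi_bound' G1Phi_cont G1Phi_bound' s])
  also have "\<dots> = Kop lam1 (\<lambda>s. Kop lam2 (\<lambda>s. G2 s (xi Phi s) - G2 s (xi Psi s)) s
      + (complex_of_real (g1 s (xi Phi s)) - complex_of_real (g1 s (xi Psi s)))) s"
  proof (rule Kop_cong)
    fix x assume x: "x \<in> {0<..s}"
    then have x2: "x \<in> {0<..t2}" using s by auto
    show "(eta2 Phi x + complex_of_real (g1 x (xi Phi x))) - (eta2 Psi x + complex_of_real (g1 x (xi Psi x))) =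
      Kop lam2 (\<lambda>s. G2 s (xi Phi s) - G2 s (xi Psi s)) x + (complex_of_real (g1 x (xi Phi x)) - complex_of_real (g1 x (xi Psi x)))"
      using eta2_diff[OF x2, of Phi Psi] by (simp add: algebra_simps)
  qed
  finally show ?thesis .
qed

lemma norm_out_le: "norm (complex_of_real x + \<i> * complex_of_real y) \<le> \<bar>x\<bar> + \<bar>y\<bar>"
  by (metis norm_ii norm_mult norm_of_real norm_triangle_ineq mult_1)

lemma out_diff:
  assumes P: "norm Phi \<le> r" and Q: "norm Psi \<le> r" and s: "s \<in> {0<..t2}"
  shows "norm (out Phi s - out Psi s) \<le> dist Phi Psi / 2 * WW s"
proof -
  define E2 where "E2 = Kop lam2 (\<lambda>s. G2 s (xi Phi s) - G2 s (xi Psi s))"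
  define E1 where "E1 = Kop lam1 (\<lambda>s. E2 s + (complex_of_real (g1 s (xi Phi s)) - complex_of_real (g1 s (xi Psi s))))"
  have eq: "out Phi s - out Psi s = complex_of_real (Re (E1 s)) + \<i> * complex_of_real (Re (E2 s + (lam1 - of_real mu) * E1 s))"
  proof -
    have "out Phi s - out Psi s = complex_of_real (Re (eta1 Phi s - eta1 Psi s)) + \<i> * complex_of_real (Re ((eta2 Phi s - eta2 Psi s) + (lam1 - of_real mu) * (eta1 Phi s - eta1 Psi s)))"
      by (simp add: out_def algebra_simps)
    then show ?thesis using eta1_diff[OF s, of Phi Psi] eta2_diff[OF s, of Phi Psi]
      by (simp only: E1_def E2_def)
  qed
  have "norm (out Phi s - out Psi s) \<le> norm (Re (E1 s)) + norm (Re (E2 s + (lam1 - of_real mu) * E1 s))"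
    unfolding eq real_norm_def by (rule norm_out_le)
  also have "\<dots> \<le> dist Phi Psi * ((1 + m) * ((((e2 + m * e1) / (2 - Re lam2) + (L2 + m * H) / (kap - Re lam2)) + e1) / (2 - Re lam1)
              + (((e2 + m * e1) / (2 - Re lam2) + (L2 + m * H) / (kap - Re lam2)) + H) / (kap - Re lam1))
          + ((e2 + m * e1) / (2 - Re lam2) + (L2 + m * H) / (kap - Re lam2))) * WW s"
    unfolding E1_def E2_def
  proof (rule chain_scaled)
    show "continuous_on {0<..t2} (\<lambda>s. G2 s (xi Phi s) - G2 s (xi Psi s))"
      by (intro continuous_intros G2Phi_cont)
    show "continuous_on {0<..t2} (\<lambda>s. complex_of_real (g1 s (xi Phi s)) - complex_of_real (g1 s (xi Psi s)))"
      by (intro continuous_intros g1Phi_cont)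
  qed (use nonneg m_nonneg s diff_G2_g1[OF P Q] in auto)
  also have "\<dots> \<le> dist Phi Psi * (1/2) * WW s"
    using contr WW_pos[of s] s by (intro mult_right_mono mult_left_mono) (auto simp: m_def)
  finally show ?thesis by simp
qed

lemma xi0: "xi 0 = (\<lambda>s. 0)"
  by (rule ext) (simp add: xi_def zero_bcontfun.rep_eq)

lemma out_zero: assumes s: "s \<in> {0<..t2}" shows "norm (out 0 s) \<le> r / 2 * WW s"
proof -
  have e2: "eta2 0 = Kop lam2 (\<lambda>s. G2 s 0)" by (simp add: eta2_def xi0)
  have e1: "eta1 0 = Kop lam1 (\<lambda>s. Kop lam2 (\<lambda>s. G2 s 0) s + complex_of_real (g1 s 0))"
    by (simp add: eta1_def e2 xi0)
  have "norm (out 0 s) \<le> norm (Re (eta1 0 s)) + norm (Re (eta2 0 s + (lam1 - of_real mu) * eta1 0 s))"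
    unfolding out_def real_norm_def by (rule norm_out_le)
  also have "\<dots> \<le> ((1 + m) * ((((F2 + m * F1) / (2 - Re lam2) + (F2f + m * F1f) / (kap - Re lam2)) + F1) / (2 - Re lam1)
              + (((F2 + m * F1) / (2 - Re lam2) + (F2f + m * F1f) / (kap - Re lam2)) + F1f) / (kap - Re lam1))
          + ((F2 + m * F1) / (2 - Re lam2) + (F2f + m * F1f) / (kap - Re lam2))) * WW s"
    unfolding e1 e2
  proof (rule chain)
    show "continuous_on {0<..t2} (\<lambda>s. G2 s 0)" using G2_cont[of "\<lambda>_. 0"] by simp
    show "continuous_on {0<..t2} (\<lambda>s. complex_of_real (g1 s 0))"
      using g1_cont[of "\<lambda>_. 0"] by (intro continuous_intros) simp
    show "norm (complex_of_real (g1 x 0)) \<le> F1 * x\<^sup>2 + F1f * (t1 powr (2 - kap) * x powr kap)" if "x \<in> {0<..t2}" for x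
      using g1_0[OF that] by simp
  qed (use nonneg m_nonneg s G2_0 in auto)
  also have "\<dots> \<le> r / 2 * WW s"
    using inv WW_pos[of s] s by (intro mult_right_mono) (auto simp: m_def)
  finally show ?thesis .
qed

lemma out_bound: "\<exists>K. \<forall>s\<in>{0<..t2}. norm (out Phi s) \<le> K * WW s"
proof -
  have "norm (out Phi s) \<le> ((1 + m) * (((AG Phi / (2 - Re lam2) + BG Phi / (kap - Re lam2)) + Ag1 Phi) / (2 - Re lam1)
              + ((AG Phi / (2 - Re lam2) + BG Phi / (kap - Re lam2)) + Bg1 Phi) / (kap - Re lam1))
          + (AG Phi / (2 - Re lam2) + BG Phi / (kap - Re lam2))) * WW s" if s: "s \<in> {0<..t2}" for s
  proof -
    have "norm (out Phi s) \<le> norm (Re (eta1 Phi s)) + norm (Re (eta2 Phi s + (lam1 - of_real mu) * eta1 Phi s))"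
      unfolding out_def real_norm_def by (rule norm_out_le)
    also have "\<dots> \<le> ((1 + m) * (((AG Phi / (2 - Re lam2) + BG Phi / (kap - Re lam2)) + Ag1 Phi) / (2 - Re lam1)
              + ((AG Phi / (2 - Re lam2) + BG Phi / (kap - Re lam2)) + Bg1 Phi) / (kap - Re lam1))
          + (AG Phi / (2 - Re lam2) + BG Phi / (kap - Re lam2))) * WW s"
      unfolding eta1_def eta2_def
      by (rule chain[OF G2Phi_cont g1Phi_cont AB_nonneg G2Phi_bound g1Phi_bound s])
    finally show ?thesis .
  qed
  then show ?thesis by blast
qed

lemma out_cont: "continuous_on {0<..t2} (out Phi)"
  unfolding out_def by (intro continuous_intros eta1_KB(2) eta2_KB(2))

lemma cl_mem: "cl t \<in> {0<..t2}"
proof -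
  have "exp (min t (ln t2)) \<le> exp (ln t2)" by simp
  then show ?thesis using t2pos by (simp add: cl_def)
qed

lemma cl_cont: "continuous_on UNIV cl"
  unfolding cl_def by (intro continuous_intros)

lemma cl_ln: "s \<in> {0<..t2} \<Longrightarrow> cl (ln s) = s"
  by (simp add: cl_def min_def)

lemma Tf_cont: "continuous_on UNIV (Tf Phi)"
proof -
  have 1: "continuous_on UNIV (\<lambda>t. out Phi (cl t))"
    by (rule continuous_on_compose2[OF out_cont cl_cont]) (use cl_mem in auto)
  have 2: "continuous_on UNIV (\<lambda>t. WW (cl t))"
    by (rule continuous_on_compose2[OF WW_cont cl_cont]) (use cl_mem in auto)
  show ?thesis unfolding Tf_def
  proof (intro continuous_intros 1 2)
    show "\<forall>t\<in>UNIV. complex_of_real (WW (cl t)) \<noteq> 0"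
      using WW_pos cl_mem by (metis greaterThanAtMost_iff less_irrefl of_real_eq_0_iff)
  qed
qed

lemma Tf_bcontfun: "Tf Phi \<in> bcontfun"
proof -
  obtain K where K: "\<forall>s\<in>{0<..t2}. norm (out Phi s) \<le> K * WW s" using out_bound by blast
  have "norm (Tf Phi t) \<le> K" for t
  proof -
    have w: "WW (cl t) > 0" using WW_pos cl_mem by auto
    have "norm (Tf Phi t) = norm (out Phi (cl t)) / WW (cl t)"
      using w by (simp add: Tf_def norm_divide)
    also have "\<dots> \<le> K" using K cl_mem w by (simp add: divide_le_eq)
    finally show ?thesis .
  qed
  then have "bounded (range (Tf Phi))" by (auto simp: bounded_iff)
  then show ?thesis using Tf_cont by (simp add: bcontfun_def)
qed

definition "T Phi = Bcontfun (Tf Phi)"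

lemma T_apply: "apply_bcontfun (T Phi) = Tf Phi"
  unfolding T_def using Tf_bcontfun by (simp add: Bcontfun_inverse)

lemma Tf_diff: assumes "norm Phi \<le> r" "norm Psi \<le> r"
  shows "dist (Tf Phi t) (Tf Psi t) \<le> dist Phi Psi / 2"
proof -
  have w: "WW (cl t) > 0" using WW_pos cl_mem by auto
  have "dist (Tf Phi t) (Tf Psi t) = norm (out Phi (cl t) - out Psi (cl t)) / WW (cl t)"
    using w by (simp add: Tf_def dist_norm norm_divide diff_divide_distrib[symmetric])
  also have "\<dots> \<le> dist Phi Psi / 2"
    using out_diff[OF assms cl_mem] w by (simp add: divide_le_eq)
  finally show ?thesis .
qed

lemma Tf_zero: "norm (Tf 0 t) \<le> r / 2"
proof -
  have w: "WW (cl t) > 0" using WW_pos cl_mem by auto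
  have "norm (Tf 0 t) = norm (out 0 (cl t)) / WW (cl t)"
    using w by (simp add: Tf_def norm_divide)
  also have "\<dots> \<le> r / 2" using out_zero[OF cl_mem] w by (simp add: divide_le_eq)
  finally show ?thesis .
qed

lemma fixpoint: "\<exists>Phi. norm Phi \<le> r \<and> T Phi = Phi"
proof -
  have "\<exists>!x\<in>cball 0 r. T x = x"
  proof (rule Banach_fix[where c="1/2"])
    show "complete (cball (0::real \<Rightarrow>\<^sub>C complex) r)"
      by (simp add: complete_eq_closed)
    show "cball (0::real \<Rightarrow>\<^sub>C complex) r \<noteq> {}" using rr by simp
    show "T ` cball 0 r \<subseteq> cball 0 r"
    proof
      fix y assume "y \<in> T ` cball 0 r"
      then obtain x where x: "norm x \<le> r" "y = T x" by auto
      have "norm (Tf x t) \<le> r" for t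
      proof -
        have "norm (Tf x t) \<le> dist (Tf x t) (Tf 0 t) + norm (Tf 0 t)"
          using norm_triangle_ineq[of "Tf x t - Tf 0 t" "Tf 0 t"] by (simp add: dist_norm)
        also have "\<dots> \<le> dist x 0 / 2 + r / 2"
          using Tf_diff[OF x(1), of 0 t] Tf_zero[of t] rr by simp
        finally show ?thesis using x(1) by simp
      qed
      then have "norm (T x) \<le> r" by (intro norm_bound) (simp add: T_apply)
      then show "y \<in> cball 0 r" using x by simp
    qed
    show "dist (T x) (T y) \<le> 1 / 2 * dist x y" if "x \<in> cball 0 r" "y \<in> cball 0 r" for x y
      using that Tf_diff[of x y] by (intro dist_bound) (auto simp: T_apply)
  qed auto
  then show ?thesis by auto
qed

end


context P begin
lemma K1: "lam1 + lam2 - of_real mu = - of_real d"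
  using lam_sum by (simp add: b0_def)

lemma K2: "(lam1 - of_real mu) * lam1 = - of_real d * (lam1 - of_real mu) - of_real c0"
proof -
  have "lam1\<^sup>2 = (lam1\<^sup>2 + of_real b0 * lam1 + of_real (2 * d)) - of_real b0 * lam1 - of_real (2 * d)" by simp
  also have "\<dots> = - of_real b0 * lam1 - of_real (2 * d)" using lam1_eq by simp
  finally have "lam1\<^sup>2 = - of_real b0 * lam1 - of_real (2 * d)" .
  moreover have "c0 = d * (mu + 2)"
  proof -
    have "c0 = (mu * p) * d" by (simp add: c0_eq algebra_simps)
    also have "\<dots> = (mu + 2) * d" by (simp only: mu_p)
    finally show ?thesis by (simp add: algebra_simps)
  qed
  ultimately show ?thesis by (simp add: power2_eq_square algebra_simps b0_def)
qed
end

context Q begin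

definition "Ps = (SOME Phi. norm Phi \<le> r \<and> T Phi = Phi)"

lemma Ps: "norm Ps \<le> r" "T Ps = Ps"
  using someI_ex[OF fixpoint] by (auto simp: Ps_def)

definition "zz s = Re (eta1 Ps s)"
definition "RR s = Re (eta2 Ps s + (lam1 - of_real mu) * eta1 Ps s)"

lemma xs_eq: assumes s: "s \<in> {0<..t2}" shows "xi Ps s = complex_of_real (zz s) + \<i> * complex_of_real (RR s)"
proof -
  have "apply_bcontfun Ps (ln s) = Tf Ps (ln s)" using Ps(2) T_apply by metis
  then have "apply_bcontfun Ps (ln s) = out Ps s / complex_of_real (WW s)"
    using cl_ln[OF s] by (simp add: Tf_def)
  then have "xi Ps s = out Ps s" using WW_pos[of s] s by (simp add: xi_def)
  then show ?thesis by (simp add: out_def zz_def RR_def)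
qed

lemma Re_xs: "s \<in> {0<..t2} \<Longrightarrow> Re (xi Ps s) = zz s" by (simp add: xs_eq)
lemma Im_xs: "s \<in> {0<..t2} \<Longrightarrow> Im (xi Ps s) = RR s" by (simp add: xs_eq)

lemma Re_deriv: "(f has_vector_derivative f') F \<Longrightarrow> ((\<lambda>x. Re (f x)) has_real_derivative Re f') F"
  unfolding has_real_derivative_iff_has_vector_derivative
  by (rule bounded_linear.has_vector_derivative[OF bounded_linear_Re])

lemma zz_deriv: assumes s: "s \<in> {0<..t2}"
  shows "(zz has_real_derivative (mu * zz s + RR s + g1 s (xi Ps s)) / s) (at s within {0<..t2})"
proof -
  have "(eta1 Ps has_vector_derivative (lam1 * eta1 Ps s + (eta2 Ps s + complex_of_real (g1 s (xi Ps s)))) / of_real s) (at s within {0<..t2})"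
    using eta1_KB(1)[of Ps] s by blast
  from Re_deriv[OF this] have D: "(zz has_real_derivative Re ((lam1 * eta1 Ps s + (eta2 Ps s + complex_of_real (g1 s (xi Ps s)))) / of_real s)) (at s within {0<..t2})"
    unfolding zz_def[abs_def] .
  have E: "Re ((lam1 * eta1 Ps s + (eta2 Ps s + complex_of_real (g1 s (xi Ps s)))) / of_real s) = (mu * zz s + RR s + g1 s (xi Ps s)) / s"
    by (simp add: zz_def RR_def Re_divide_of_real algebra_simps)
  show ?thesis using D unfolding E .
qed

lemma RR_deriv: assumes s: "s \<in> {0<..t2}"
  shows "(RR has_real_derivative (- d * RR s - c0 * zz s + g2 s (xi Ps s)) / s) (at s within {0<..t2})"
proof -
  have d2: "(eta2 Ps has_vector_derivative (lam2 * eta2 Ps s + G2 s (xi Ps s)) / of_real s) (at s within {0<..t2})"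
    using eta2_KB(1)[of Ps] s unfolding eta2_def by blast
  have d1: "(eta1 Ps has_vector_derivative (lam1 * eta1 Ps s + (eta2 Ps s + complex_of_real (g1 s (xi Ps s)))) / of_real s) (at s within {0<..t2})"
    using eta1_KB(1)[of Ps] s by blast
  have "((\<lambda>x. eta2 Ps x + (lam1 - of_real mu) * eta1 Ps x) has_vector_derivative
      (lam2 * eta2 Ps s + G2 s (xi Ps s)) / of_real s + (lam1 - of_real mu) * ((lam1 * eta1 Ps s + (eta2 Ps s + complex_of_real (g1 s (xi Ps s)))) / of_real s))
      (at s within {0<..t2})"
    by (intro derivative_intros d1 d2)
  from Re_deriv[OF this] have D: "(RR has_real_derivative Re ((lam2 * eta2 Ps s + G2 s (xi Ps s)) / of_real s + (lam1 - of_real mu) * ((lam1 * eta1 Ps s + (eta2 Ps s + complex_of_real (g1 s (xi Ps s)))) / of_real s))) (at s within {0<..t2})"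
    unfolding RR_def[abs_def] .
  have "(lam2 * eta2 Ps s + G2 s (xi Ps s)) + (lam1 - of_real mu) * (lam1 * eta1 Ps s + (eta2 Ps s + complex_of_real (g1 s (xi Ps s))))
      = (lam1 + lam2 - of_real mu) * eta2 Ps s + ((lam1 - of_real mu) * lam1) * eta1 Ps s + complex_of_real (g2 s (xi Ps s))"
    by (simp add: G2_def algebra_simps)
  also have "\<dots> = - of_real d * (eta2 Ps s + (lam1 - of_real mu) * eta1 Ps s) - of_real c0 * eta1 Ps s + complex_of_real (g2 s (xi Ps s))"
    by (subst K1, subst K2) (simp add: algebra_simps)
  finally have E: "(lam2 * eta2 Ps s + G2 s (xi Ps s)) + (lam1 - of_real mu) * (lam1 * eta1 Ps s + (eta2 Ps s + complex_of_real (g1 s (xi Ps s))))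
      = - of_real d * (eta2 Ps s + (lam1 - of_real mu) * eta1 Ps s) - of_real c0 * eta1 Ps s + complex_of_real (g2 s (xi Ps s))" .
  have "Re ((lam2 * eta2 Ps s + G2 s (xi Ps s)) / of_real s + (lam1 - of_real mu) * ((lam1 * eta1 Ps s + (eta2 Ps s + complex_of_real (g1 s (xi Ps s)))) / of_real s))
     = Re (((lam2 * eta2 Ps s + G2 s (xi Ps s)) + (lam1 - of_real mu) * (lam1 * eta1 Ps s + (eta2 Ps s + complex_of_real (g1 s (xi Ps s))))) / of_real s)"
  proof -
    have "\<And>X Y Z. X / complex_of_real s + Y * (Z / complex_of_real s) = (X + Y * Z) / complex_of_real s"
      by (simp add: add_divide_distrib)
    then show ?thesis by (simp only:)
  qed
  also have "\<dots> = (- d * RR s - c0 * zz s + g2 s (xi Ps s)) / s"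
    unfolding E by (simp add: Re_divide_of_real RR_def zz_def)
  finally have E2: "Re ((lam2 * eta2 Ps s + G2 s (xi Ps s)) / of_real s + (lam1 - of_real mu) * ((lam1 * eta1 Ps s + (eta2 Ps s + complex_of_real (g1 s (xi Ps s)))) / of_real s))
     = (- d * RR s - c0 * zz s + g2 s (xi Ps s)) / s" .
  show ?thesis using D unfolding E2 .
qed

end


context Q begin

definition "yy s = a + zz s"
definition "QQ s = RR s - mu * a"
definition "SS s = s powr d * QQ s"
definition "UU s = s powr (- mu) * yy s"
definition "VV s = SS s / (sin s) ^ (N - 1)"
definition "U2 s = - (s powr (- mu - 2)) * fcl Ym p (yy s) - (real N - 1) * (cos s / sin s) * VV s"

lemma alg_VV: fixes A S c n sn P f :: real assumes "sn > 0" "P > 0"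
  shows "((-(A * (sn * P) * f)) * (sn * P) - S * (n * P * c)) / ((sn * P) * (sn * P)) = - A * f - n * (c / sn) * (S / (sn * P))"
  using assms by (simp add: field_simps power2_eq_square)

lemma deriv_eqI: "(f has_real_derivative x) F \<Longrightarrow> x = y \<Longrightarrow> (f has_real_derivative y) F"
  by simp

lemma sin_pos2: "s \<in> {0<..t2} \<Longrightarrow> sin s > 0"
  using t1 by (intro sin_gt_zero) auto

lemma g1_xs: "s \<in> {0<..t2} \<Longrightarrow> g1 s (xi Ps s) = QQ s * (1 / h s - 1)"
  by (simp add: g1_def Im_xs QQ_def)

lemma g2_xs: "s \<in> {0<..t2} \<Longrightarrow> g2 s (xi Ps s) = a powr p + c0 * zz s - h s * fcl Ym p (yy s)"
  by (simp add: g2_def Re_xs yy_def)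

lemma yy_deriv: assumes s: "s \<in> {0<..t2}"
  shows "(yy has_real_derivative (mu * yy s + QQ s / h s) / s) (at s within {0<..t2})"
proof -
  have hp: "h s > 0" using h_pos2 s by auto
  have fe: "(\<lambda>s. a + zz s) = yy" by (rule ext) (simp add: yy_def)
  have D: "((\<lambda>s. a + zz s) has_real_derivative (mu * zz s + RR s + g1 s (xi Ps s)) / s) (at s within {0<..t2})"
    using zz_deriv[OF s] by (intro derivative_eq_intros) auto
  have E: "(mu * zz s + RR s + g1 s (xi Ps s)) / s = (mu * yy s + QQ s / h s) / s"
    using hp by (simp add: g1_xs[OF s] yy_def QQ_def field_simps)
  show ?thesis by (rule deriv_eqI[OF D[unfolded fe] E])
qed

lemma QQ_deriv: assumes s: "s \<in> {0<..t2}"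
  shows "(QQ has_real_derivative (- d * QQ s - h s * fcl Ym p (yy s)) / s) (at s within {0<..t2})"
proof -
  have fe: "(\<lambda>s. RR s - mu * a) = QQ" by (rule ext) (simp add: QQ_def)
  have D: "((\<lambda>s. RR s - mu * a) has_real_derivative (- d * RR s - c0 * zz s + g2 s (xi Ps s)) / s) (at s within {0<..t2})"
    using RR_deriv[OF s] by (intro derivative_eq_intros) auto
  have E: "(- d * RR s - c0 * zz s + g2 s (xi Ps s)) / s = (- d * QQ s - h s * fcl Ym p (yy s)) / s"
    by (simp add: g2_xs[OF s] QQ_def a_p algebra_simps)
  show ?thesis by (rule deriv_eqI[OF D[unfolded fe] E])
qed

lemma pow_powr: "s > 0 \<Longrightarrow> s ^ (N - 1) = s powr (real N - 1)"
  using N3 by (simp add: powr_realpow[symmetric] of_nat_diff)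

lemma UU_deriv: assumes s: "s \<in> {0<..t2}"
  shows "(UU has_real_derivative VV s) (at s within {0<..t2})"
proof -
  have sp: "s > 0" using s by auto
  have hp: "h s > 0" using h_pos2 s by auto
  have sn: "sin s > 0" using sin_pos2 s by auto
  have fe: "(\<lambda>s. s powr (- mu) * yy s) = UU" by (rule ext) (simp add: UU_def)
  have D: "((\<lambda>s. s powr (- mu) * yy s) has_real_derivative
      (s powr (- mu) * ((mu * yy s + QQ s / h s) / s) + (- mu * s powr (- mu - 1)) * yy s)) (at s within {0<..t2})"
    using DERIV_mult'[OF has_field_derivative_at_within[OF has_real_derivative_powr[OF sp, of "- mu"]] yy_deriv[OF s]]
    by (simp add: algebra_simps)
  have E: "s powr (- mu) * ((mu * yy s + QQ s / h s) / s) + (- mu * s powr (- mu - 1)) * yy s = VV s"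
  proof -
    have e1: "s powr (- mu) / s = s powr (- mu - 1)" using sp by (simp add: powr_diff)
    have e2: "s powr (- mu - 1) / h s = s powr d / (sin s) ^ (N - 1)"
    proof -
      have hh: "h s = (sin s) ^ (N - 1) / s ^ (N - 1)" by (simp add: h_def power_divide)
      have pp: "s powr (- mu - 1) * s ^ (N - 1) = s powr d"
        using sp pow_powr[OF sp] by (simp add: powr_add[symmetric] d_def algebra_simps)
      have "s powr (- mu - 1) / h s = s powr (- mu - 1) * s ^ (N - 1) / (sin s) ^ (N - 1)"
        unfolding hh by simp
      then show ?thesis unfolding pp .
    qed
    have "s powr (- mu) * ((mu * yy s + QQ s / h s) / s) + (- mu * s powr (- mu - 1)) * yy s
        = (s powr (- mu) / s) * (mu * yy s + QQ s / h s) - mu * s powr (- mu - 1) * yy s"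
      using sp by (simp add: field_simps)
    also have "\<dots> = QQ s * (s powr (- mu - 1) / h s)" unfolding e1 using hp by (simp add: field_simps)
    also have "\<dots> = VV s" unfolding e2 by (simp add: VV_def SS_def)
    finally show ?thesis .
  qed
  show ?thesis by (rule deriv_eqI[OF D[unfolded fe] E])
qed

lemma SS_deriv: assumes s: "s \<in> {0<..t2}"
  shows "(SS has_real_derivative - (s powr (d - 1) * h s * fcl Ym p (yy s))) (at s within {0<..t2})"
proof -
  have sp: "s > 0" using s by auto
  have fe: "(\<lambda>s. s powr d * QQ s) = SS" by (rule ext) (simp add: SS_def)
  have D: "((\<lambda>s. s powr d * QQ s) has_real_derivative
      (s powr d * ((- d * QQ s - h s * fcl Ym p (yy s)) / s) + (d * s powr (d - 1)) * QQ s)) (at s within {0<..t2})"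
    using DERIV_mult'[OF has_field_derivative_at_within[OF has_real_derivative_powr[OF sp, of d]] QQ_deriv[OF s]]
    by (simp add: algebra_simps)
  have e1: "s powr d / s = s powr (d - 1)" using sp by (simp add: powr_diff)
  have E: "s powr d * ((- d * QQ s - h s * fcl Ym p (yy s)) / s) + (d * s powr (d - 1)) * QQ s
      = - (s powr (d - 1) * h s * fcl Ym p (yy s))"
  proof -
    have "s powr d * ((- d * QQ s - h s * fcl Ym p (yy s)) / s) = (s powr d / s) * (- d * QQ s - h s * fcl Ym p (yy s))"
      by simp
    then show ?thesis unfolding e1 by (simp add: algebra_simps)
  qed
  show ?thesis by (rule deriv_eqI[OF D[unfolded fe] E])
qed

lemma VV_deriv: assumes s: "s \<in> {0<..t2}"
  shows "(VV has_real_derivative U2 s) (at s within {0<..t2})"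
proof -
  have sp: "s > 0" using s by auto
  have sn: "sin s > 0" using sin_pos2 s by auto
  have hp: "h s > 0" using h_pos2 s by auto
  have fe: "(\<lambda>s. SS s / (sin s) ^ (N - 1)) = VV" by (rule ext) (simp add: VV_def)
  have Dp: "((\<lambda>s. (sin s) ^ (N - 1)) has_real_derivative (real (N - 1) * (sin s) ^ (N - 2) * cos s)) (at s within {0<..t2})"
  proof -
    have n2: "N - 1 - Suc 0 = N - 2" by simp
    show ?thesis
      using DERIV_power[where n="N - 1", OF has_field_derivative_at_within[OF DERIV_sin[of s]]]
      unfolding n2 by (simp add: algebra_simps)
  qed
  have D: "((\<lambda>s. SS s / (sin s) ^ (N - 1)) has_real_derivative
     ((- (s powr (d - 1) * h s * fcl Ym p (yy s))) * (sin s) ^ (N - 1) - SS s * (real (N - 1) * (sin s) ^ (N - 2) * cos s))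
        / ((sin s) ^ (N - 1) * (sin s) ^ (N - 1))) (at s within {0<..t2})"
    by (rule DERIV_divide[OF SS_deriv[OF s] Dp]) (use sn in simp)
  define P where "P = (sin s) ^ (N - 2)"
  have P: "P > 0" using sn by (simp add: P_def)
  have sP: "(sin s) ^ (N - 1) = sin s * P"
    using N3 by (simp add: P_def power_Suc[symmetric] Suc_diff_Suc numeral_2_eq_2)
  have hh: "h s * s ^ (N - 1) = (sin s) ^ (N - 1)"
    using sp by (simp add: h_def power_divide)
  have pw: "s powr (d - 1) = s powr (- mu - 2) * s ^ (N - 1)"
    using sp pow_powr[OF sp] by (simp add: powr_add[symmetric] d_def algebra_simps)
  have key: "s powr (d - 1) * h s = s powr (- mu - 2) * (sin s) ^ (N - 1)"
    unfolding pw hh[symmetric] by (simp add: algebra_simps)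
  have nn: "real N - 1 = real (N - 1)" using N3 by (simp add: of_nat_diff)
  have E: "((- (s powr (d - 1) * h s * fcl Ym p (yy s))) * (sin s) ^ (N - 1) - SS s * (real (N - 1) * (sin s) ^ (N - 2) * cos s))
        / ((sin s) ^ (N - 1) * (sin s) ^ (N - 1)) = U2 s"
    unfolding U2_def VV_def key unfolding sP P_def[symmetric] nn
    by (rule alg_VV[OF sn P])
  show ?thesis by (rule deriv_eqI[OF D[unfolded fe] E])
qed

end


lemma ratio_alg: fixes x C T Y a k mu :: real assumes "x > 0" "C > 0" "T > 0" "a > 0"
  shows "(x powr (- mu) * Y) / (a * C powr (- k) * T powr (- mu)) = (Y / a) * C powr k * (T / x) powr mu"
  using assms by (simp add: powr_minus powr_divide field_simps)

lemma tan_lim: "((\<lambda>x::real. 2 * tan (x / 2) / x) \<longlongrightarrow> 1) (at_right 0)"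
proof -
  have "((\<lambda>x::real. 2 * tan (x / 2)) has_real_derivative 1) (at 0)"
    by (auto intro!: derivative_eq_intros)
  then have "((\<lambda>y::real. (2 * tan (y / 2) - 2 * tan (0 / 2)) / (y - 0)) \<longlongrightarrow> 1) (at 0)"
    unfolding has_field_derivative_iff .
  then have "((\<lambda>y::real. 2 * tan (y / 2) / y) \<longlongrightarrow> 1) (at 0)" by simp
  then show ?thesis by (simp add: filterlim_at_split)
qed

lemma mono_w: fixes f :: "real \<Rightarrow> real"
  assumes "a \<le> b" "\<And>x. x \<in> {a..b} \<Longrightarrow> (f has_real_derivative f' x) (at x within {a..b})" "\<And>x. x \<in> {a..b} \<Longrightarrow> f' x \<le> 0"
  shows "f b \<le> f a"
proof -
  have "\<exists>x\<in>{a..b}. f b - f a = (\<lambda>h. f' x * h) (b - a)"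
    using mvt_very_simple[OF assms(1), of f "\<lambda>x h. f' x * h"] assms(2) unfolding has_field_derivative_def
    by auto
  then obtain x where x: "x \<in> {a..b}" "f b - f a = f' x * (b - a)" by auto
  then have "f b - f a = (b - a) * f' x" by simp
  moreover have "(b - a) * f' x \<le> 0" using assms(1) assms(3)[OF x(1)] by (simp add: mult_nonneg_nonpos)
  ultimately show ?thesis by simp
qed

lemma strict_w: fixes f :: "real \<Rightarrow> real"
  assumes "a < b" "\<And>x. x \<in> {a..b} \<Longrightarrow> (f has_real_derivative f' x) (at x within {a..b})" "\<And>x. x \<in> {a..b} \<Longrightarrow> f' x < 0"
  shows "f b < f a"
proof -
  have "\<exists>x\<in>{a<..<b}. f b - f a = (\<lambda>h. f' x * h) (b - a)"
    using mvt_simple[OF assms(1), of f "\<lambda>x h. f' x * h"] assms(2) unfolding has_field_derivative_def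
    by auto
  then obtain x where x: "x \<in> {a<..<b}" "f b - f a = f' x * (b - a)" by auto
  then have "f b - f a = (b - a) * f' x" by simp
  moreover have "(b - a) * f' x < 0" using assms(1) assms(3)[of x] x(1) by (simp add: mult_pos_neg)
  ultimately show ?thesis by simp
qed

lemma deriv_cont: "(\<And>x. x \<in> S \<Longrightarrow> (f has_real_derivative f' x) (at x within S)) \<Longrightarrow> continuous_on S f"
  unfolding continuous_on_eq_continuous_within using DERIV_continuous by blast

context Q begin

lemma small: assumes s: "s \<in> {0<..t1}"
  shows "\<bar>zz s\<bar> \<le> r * s\<^sup>2" "\<bar>RR s\<bar> \<le> r * s\<^sup>2"
proof -
  have s2: "s \<in> {0<..t2}" using s t1 by auto
  have "norm (xi Ps s) \<le> norm Ps * WW s" using xi_norm s by auto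
  also have "\<dots> \<le> r * s\<^sup>2" using Ps(1) WW_near s by (auto intro: mult_right_mono)
  finally have n: "norm (xi Ps s) \<le> r * s\<^sup>2" .
  show "\<bar>zz s\<bar> \<le> r * s\<^sup>2" using n abs_Re_le_cmod[of "xi Ps s"] Re_xs[OF s2] by simp
  show "\<bar>RR s\<bar> \<le> r * s\<^sup>2" using n abs_Im_le_cmod[of "xi Ps s"] Im_xs[OF s2] by simp
qed

lemma small_del: assumes s: "s \<in> {0<..t1}" shows "\<bar>zz s\<bar> \<le> del" "\<bar>RR s\<bar> \<le> del"
proof -
  have "r * s\<^sup>2 \<le> r * t1\<^sup>2" using s rr by (intro mult_left_mono power_mono) auto
  then show "\<bar>zz s\<bar> \<le> del" "\<bar>RR s\<bar> \<le> del" using small[OF s] rr by linarith+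
qed

lemma fcl_nonneg: "fcl Ym p y \<ge> 0" by (simp add: fcl_def)

lemma fcl_eq: "0 \<le> y \<Longrightarrow> y \<le> Ym \<Longrightarrow> fcl Ym p y = y powr p"
  by (simp add: fcl_def)

lemma yy_cont: "continuous_on {0<..t2} yy" using yy_deriv by (rule deriv_cont)
lemma UU_cont: "continuous_on {0<..t2} UU" using UU_deriv by (rule deriv_cont)
lemma VV_cont: "continuous_on {0<..t2} VV" using VV_deriv by (rule deriv_cont)

lemma U2_cont: "continuous_on {0<..t2} U2"
  unfolding U2_def using sin_pos2
  by (intro continuous_intros VV_cont continuous_on_compose2[OF fcl_cont[of UNIV] yy_cont])
     (auto simp: less_imp_neq[symmetric])

definition "cc = t1 powr d * mu * a / 2"
lemma cc_pos: "cc > 0" using t1 mu_pos a_pos by (simp add: cc_def)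

lemma SS_mono: assumes "t \<in> {t1..t2}" shows "SS t \<le> SS t1"
proof (rule mono_w[of t1 t SS "\<lambda>s. - (s powr (d - 1) * h s * fcl Ym p (yy s))"])
  show "t1 \<le> t" using assms by auto
  fix x assume x: "x \<in> {t1..t}"
  then have x2: "x \<in> {0<..t2}" using assms t1 by auto
  show "(SS has_real_derivative - (x powr (d - 1) * h x * fcl Ym p (yy x))) (at x within {t1..t})"
    by (rule has_field_derivative_subset[OF SS_deriv[OF x2]]) (use assms t1 in auto)
  show "- (x powr (d - 1) * h x * fcl Ym p (yy x)) \<le> 0"
    using h_pos2[OF x2] fcl_nonneg by simp
qed

lemma SS_t1: "SS t1 \<le> - cc"
proof -
  have t1m: "t1 \<in> {0<..t1}" using t1 by auto
  have "QQ t1 \<le> - (mu * a / 2)" using small_del(2)[OF t1m] del by (simp add: QQ_def)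
  then have "t1 powr d * QQ t1 \<le> t1 powr d * (- (mu * a / 2))" by (intro mult_left_mono) auto
  then show ?thesis by (simp add: SS_def cc_def)
qed

lemma VV_bound: assumes "t \<in> {t1..t2}" shows "VV t \<le> - cc / (sin t)\<^sup>2"
proof -
  have t2': "t \<in> {0<..t2}" using assms t1 by auto
  have sn: "sin t > 0" using sin_pos2[OF t2'] .
  have s1: "sin t \<le> 1" by simp
  have pw: "(sin t) ^ (N - 1) \<le> (sin t)\<^sup>2"
    using N3 sn s1 by (intro power_decreasing) auto
  have pp: "(sin t) ^ (N - 1) > 0" using sn by simp
  have "VV t = SS t / (sin t) ^ (N - 1)" by (simp add: VV_def)
  also have "\<dots> \<le> - cc / (sin t) ^ (N - 1)"
    using SS_mono[OF assms] SS_t1 pp by (intro divide_right_mono) auto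
  also have "\<dots> \<le> - cc / (sin t)\<^sup>2"
  proof -
    have "cc / (sin t)\<^sup>2 \<le> cc / (sin t) ^ (N - 1)"
      using cc_pos pw pp sn by (intro divide_left_mono) auto
    then show ?thesis by simp
  qed
  finally show ?thesis .
qed

lemma UU_t2: "UU t2 < 0"
proof -
  have "(\<lambda>s. UU s - cc * cot s) t2 \<le> (\<lambda>s. UU s - cc * cot s) t1"
  proof (rule mono_w[of t1 t2 _ "\<lambda>s. VV s + cc / (sin s)\<^sup>2"])
    show "t1 \<le> t2" using t1 by simp
    fix x assume x: "x \<in> {t1..t2}"
    then have x2: "x \<in> {0<..t2}" using t1 by auto
    have sn: "sin x \<noteq> 0" using sin_pos2[OF x2] by simp
    have "((\<lambda>s. UU s - cc * cot s) has_real_derivative VV x - cc * (- inverse ((sin x)\<^sup>2))) (at x within {t1..t2})"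
      by (intro DERIV_diff DERIV_cmult has_field_derivative_subset[OF UU_deriv[OF x2]]
          has_field_derivative_at_within[OF DERIV_cot[OF sn]]) (use t1 in auto)
    then show "((\<lambda>s. UU s - cc * cot s) has_real_derivative VV x + cc / (sin x)\<^sup>2) (at x within {t1..t2})"
      by (simp add: divide_inverse)
    show "VV x + cc / (sin x)\<^sup>2 \<le> 0" using VV_bound[OF x] by linarith
  qed
  then have "UU t2 \<le> UU t1 - cc * (cot t1 - cot t2)" by (simp add: algebra_simps)
  moreover have "UU t1 \<le> t1 powr (- mu) * (3 * a / 2)"
  proof -
    have "yy t1 \<le> 3 * a / 2" using small_del(1)[of t1] t1 del by (simp add: yy_def)
    then have "t1 powr (- mu) * yy t1 \<le> t1 powr (- mu) * (3 * a / 2)" by (intro mult_left_mono) auto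
    then show ?thesis by (simp add: UU_def)
  qed
  moreover have "cc * (cot t1 - cot t2) > t1 powr (- mu) * (3 * a / 2)"
    using zero by (simp add: cc_def algebra_simps)
  ultimately show ?thesis by linarith
qed

lemma yy_near: "s \<in> {0<..t1} \<Longrightarrow> yy s \<ge> a / 2 \<and> yy s \<le> 3 * a / 2"
proof -
  assume s: "s \<in> {0<..t1}"
  have "\<bar>zz s\<bar> \<le> del" by (rule small_del(1)[OF s])
  then show ?thesis using del unfolding yy_def abs_le_iff by linarith
qed

lemma UU_t1: "UU t1 > 0"
  using yy_near[of t1] t1 a_pos by (simp add: UU_def)

lemma VV_neg: "t \<in> {t1..t2} \<Longrightarrow> VV t < 0"
proof -
  assume t: "t \<in> {t1..t2}"
  then have "sin t > 0" using sin_pos2[of t] t1 by auto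
  then have "cc / (sin t)\<^sup>2 > 0" using cc_pos by simp
  then show ?thesis using VV_bound[OF t] by linarith
qed

lemma UU_strict: assumes "t1 \<le> x" "x < y" "y \<le> t2" shows "UU y < UU x"
proof (rule strict_w[OF assms(2)])
  fix z assume z: "z \<in> {x..y}"
  then have z2: "z \<in> {0<..t2}" "z \<in> {t1..t2}" using assms t1 by auto
  show "(UU has_real_derivative VV z) (at z within {x..y})"
    by (rule has_field_derivative_subset[OF UU_deriv[OF z2(1)]]) (use assms t1 in auto)
  show "VV z < 0" using VV_neg[OF z2(2)] .
qed

lemma zz_lim: "(zz \<longlongrightarrow> 0) (at_right 0)"
proof (rule Lim_null_comparison)
  show "\<forall>\<^sub>F x in at_right 0. norm (zz x) \<le> r * x\<^sup>2"
    unfolding eventually_at_right_field using t1 small(1)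
    by (intro exI[of _ t1]) (auto simp: less_imp_le)
  have "((\<lambda>x::real. r * x\<^sup>2) \<longlongrightarrow> r * 0\<^sup>2) (at_right 0)"
    by (intro tendsto_intros)
  then show "((\<lambda>x::real. r * x\<^sup>2) \<longlongrightarrow> 0) (at_right 0)" by simp
qed

lemma ratio_lim: "((\<lambda>x. UU x / (a * cos (x / 2) powr (- (real N - 2)) * (2 * tan (x / 2)) powr (- mu))) \<longlongrightarrow> 1) (at_right 0)"
proof -
  have ev: "\<forall>\<^sub>F x in at_right 0. (yy x / a) * cos (x / 2) powr (real N - 2) * (2 * tan (x / 2) / x) powr mu
      = UU x / (a * cos (x / 2) powr (- (real N - 2)) * (2 * tan (x / 2)) powr (- mu))"
    unfolding eventually_at_right_field
  proof (intro exI[of _ 1] conjI allI impI)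
    fix x :: real assume x: "0 < x" "x < 1"
    have c: "cos (x / 2) > 0" using x pi_gt3 by (intro cos_gt_zero) auto
    have tn: "tan (x / 2) > 0" using x pi_gt3 by (intro tan_gt_zero) auto
    show "(yy x / a) * cos (x / 2) powr (real N - 2) * (2 * tan (x / 2) / x) powr mu
      = UU x / (a * cos (x / 2) powr (- (real N - 2)) * (2 * tan (x / 2)) powr (- mu))"
      unfolding UU_def using ratio_alg[OF x(1) c _ a_pos, of "2 * tan (x / 2)" mu "yy x" "real N - 2"] tn by simp
  qed simp
  have l1: "((\<lambda>x. yy x / a) \<longlongrightarrow> 1) (at_right 0)"
  proof -
    have "((\<lambda>x. (a + zz x) / a) \<longlongrightarrow> (a + 0) / a) (at_right 0)"
      by (intro tendsto_intros zz_lim) (use a_pos in simp)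
    then show ?thesis using a_pos by (simp add: yy_def[abs_def])
  qed
  have l2: "((\<lambda>x::real. cos (x / 2) powr (real N - 2)) \<longlongrightarrow> cos (0 / 2) powr (real N - 2)) (at_right 0)"
    by (intro tendsto_intros tendsto_ident_at) auto
  have l3: "((\<lambda>x::real. (2 * tan (x / 2) / x) powr mu) \<longlongrightarrow> 1 powr mu) (at_right 0)"
    by (intro tendsto_powr' tan_lim tendsto_const) auto
  have "((\<lambda>x. (yy x / a) * cos (x / 2) powr (real N - 2) * (2 * tan (x / 2) / x) powr mu) \<longlongrightarrow> 1 * 1 * 1) (at_right 0)"
    using tendsto_mult[OF tendsto_mult[OF l1 l2] l3] by simp
  then show ?thesis using tendsto_cong[OF ev] by simp
qed

lemma main_Q: "\<exists>\<Theta> U U' U''. 0 < \<Theta> \<and> \<Theta> < pi \<and>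
     (\<forall>x\<in>{0<..\<Theta>}. (U has_real_derivative U' x) (at x within {0<..\<Theta>}) \<and>
                         (U' has_real_derivative U'' x) (at x within {0<..\<Theta>})) \<and>
     continuous_on {0<..\<Theta>} U'' \<and>
     (\<forall>x\<in>{0<..<\<Theta>}. U'' x + (real N - 1) * (cos x / sin x) * U' x + U x powr p = 0) \<and>
     U \<Theta> = 0 \<and>
     (\<forall>x\<in>{0<..<\<Theta>}. U x > 0) \<and>
     (let \<mu> = 2 / (p - 1); a = (\<mu> * (real N - 2 - \<mu>)) powr (\<mu> / 2) in
       ((\<lambda>x. U x / (a * cos (x / 2) powr (-(real N - 2)) * (2 * tan (x / 2)) powr (-\<mu>)))
          \<longlongrightarrow> 1) (at_right 0))"
proof -
  have "\<exists>x. t1 \<le> x \<and> x \<le> t2 \<and> UU x = 0"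
    using UU_t1 UU_t2 t1 by (intro IVT2' continuous_on_subset[OF UU_cont]) auto
  then obtain Th where Th: "t1 \<le> Th" "Th \<le> t2" "UU Th = 0" by blast
  have Th1: "t1 < Th" using Th UU_t1 by (cases "Th = t1") auto
  have Th2: "Th < t2" using Th UU_t2 by (cases "Th = t2") auto
  have pos: "UU x > 0" if x: "x \<in> {0<..<Th}" for x
  proof (cases "x \<le> t1")
    case True
    then show ?thesis using yy_near[of x] x a_pos by (simp add: UU_def)
  next
    case False
    then show ?thesis using UU_strict[of x Th] x Th by auto
  qed
  have yb: "0 < yy x \<and> yy x \<le> Ym" if x: "x \<in> {0<..<Th}" for x
  proof (cases "x \<le> t1")
    case True
    then show ?thesis using yy_near[of x] x a_pos Ym by auto
  next
    case False
    have xp: "x > 0" using x by auto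
    have ye: "yy x = x powr mu * UU x" using xp by (simp add: UU_def powr_minus field_simps)
    have "UU x \<le> UU t1" using UU_strict[of t1 x] False Th x by (cases "x = t1") auto
    also have "\<dots> \<le> t1 powr (- mu) * (3 * a / 2)"
    proof -
      have "yy t1 \<le> 3 * a / 2" using yy_near[of t1] t1 by auto
      then have "t1 powr (- mu) * yy t1 \<le> t1 powr (- mu) * (3 * a / 2)" by (intro mult_left_mono) auto
      then show ?thesis by (simp add: UU_def)
    qed
    finally have u: "UU x \<le> t1 powr (- mu) * (3 * a / 2)" .
    have "x powr mu \<le> pi powr mu" using x Th t1 mu_pos by (intro powr_mono2) auto
    then have "x powr mu * UU x \<le> pi powr mu * (t1 powr (- mu) * (3 * a / 2))"
      using u pos[OF x] by (intro mult_mono) auto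
    then show ?thesis using ye pos[OF x] Ym xp by (auto simp: algebra_simps)
  qed
  have P1: "0 < Th" "Th < pi" using Th1 Th2 t1 by auto
  have A: "\<forall>x\<in>{0<..Th}. (UU has_real_derivative VV x) (at x within {0<..Th}) \<and> (VV has_real_derivative U2 x) (at x within {0<..Th})"
  proof
    fix x assume x: "x \<in> {0<..Th}"
    then have x2: "x \<in> {0<..t2}" using Th2 by auto
    show "(UU has_real_derivative VV x) (at x within {0<..Th}) \<and> (VV has_real_derivative U2 x) (at x within {0<..Th})"
    proof
      show "(UU has_real_derivative VV x) (at x within {0<..Th})"
        by (rule has_field_derivative_subset[OF UU_deriv[OF x2]]) (use Th2 in auto)
      show "(VV has_real_derivative U2 x) (at x within {0<..Th})"
        by (rule has_field_derivative_subset[OF VV_deriv[OF x2]]) (use Th2 in auto)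
    qed
  qed
  have B: "continuous_on {0<..Th} U2" by (rule continuous_on_subset[OF U2_cont]) (use Th2 in auto)
  have C: "\<forall>x\<in>{0<..<Th}. U2 x + (real N - 1) * (cos x / sin x) * VV x + UU x powr p = 0"
  proof
    fix x assume x: "x \<in> {0<..<Th}"
    have xp: "x > 0" using x by auto
    have f: "fcl Ym p (yy x) = yy x powr p" using yb[OF x] by (intro fcl_eq) auto
    have "UU x powr p = (x powr (- mu)) powr p * yy x powr p"
      unfolding UU_def using yb[OF x] xp by (simp add: powr_mult)
    also have "(x powr (- mu)) powr p = x powr (- mu - 2)"
      using mu_p by (simp add: powr_powr algebra_simps)
    finally have "UU x powr p = x powr (- mu - 2) * yy x powr p" .
    then show "U2 x + (real N - 1) * (cos x / sin x) * VV x + UU x powr p = 0"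
      by (simp add: U2_def f)
  qed
  have D: "\<forall>x\<in>{0<..<Th}. UU x > 0" using pos by blast
  have E: "let \<mu> = 2 / (p - 1); a = (\<mu> * (real N - 2 - \<mu>)) powr (\<mu> / 2) in
       ((\<lambda>x. UU x / (a * cos (x / 2) powr (-(real N - 2)) * (2 * tan (x / 2)) powr (-\<mu>))) \<longlongrightarrow> 1) (at_right 0)"
  proof -
    have e: "2 / (p - 1) = mu" by (simp add: mu_def)
    have e2: "(mu * (real N - 2 - mu)) powr (mu / 2) = a" by (simp add: a_def d_def)
    show ?thesis unfolding Let_def e e2 by (rule ratio_lim)
  qed
  show ?thesis
    by (rule exI[of _ Th], rule exI[of _ UU], rule exI[of _ VV], rule exI[of _ U2])
       (intro conjI P1 A B C Th(3) D E)
qed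

end


lemma fcl_eq': "0 \<le> y \<Longrightarrow> y \<le> Ym \<Longrightarrow> fcl Ym p y = y powr p"
  by (simp add: fcl_def)

lemma lip_mvt:
  fixes f :: "real \<Rightarrow> real"
  assumes "u \<le> v" "continuous_on {u..v} f"
    "\<And>z. z \<in> {u<..<v} \<Longrightarrow> (f has_real_derivative f' z) (at z)"
    "\<And>z. z \<in> {u<..<v} \<Longrightarrow> \<bar>f' z\<bar> \<le> L"
  shows "\<bar>f v - f u\<bar> \<le> L * (v - u)"
proof (cases "u = v")
  case True then show ?thesis by simp
next
  case False
  then have uv: "u < v" using assms(1) by simp
  obtain l z where z: "u < z" "z < v" "DERIV f z :> l" "f v - f u = (v - u) * l"
    using MVT[OF uv assms(2)] assms(3) real_differentiable_def by (metis greaterThanLessThan_iff)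
  have "l = f' z" using DERIV_unique[OF z(3) assms(3)] z by auto
  then have "\<bar>l\<bar> \<le> L" using assms(4) z by auto
  then have "(v - u) * \<bar>l\<bar> \<le> (v - u) * L" using uv by (intro mult_left_mono) auto
  moreover have "\<bar>f v - f u\<bar> = (v - u) * \<bar>l\<bar>" using z(4) uv by (simp add: abs_mult)
  ultimately show ?thesis by (simp add: algebra_simps)
qed

lemma lip_sym:
  assumes "\<And>x y. x \<le> y \<Longrightarrow> x \<in> S \<Longrightarrow> y \<in> S \<Longrightarrow> \<bar>f y - f x\<bar> \<le> (L::real) * (y - x)"
    and "x \<in> S" "y \<in> S"
  shows "\<bar>f x - f y\<bar> \<le> L * \<bar>x - y\<bar>"
proof (cases "x \<le> y")
  case True
  then show ?thesis using assms(1)[OF True assms(2,3)] by (simp add: abs_minus_commute)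
next
  case False
  then show ?thesis using assms(1)[of y x] assms(2,3) by simp
qed

lemma powr_lip:
  fixes p Ym :: real
  assumes p: "p > 1" and y: "0 \<le> y1" "y1 \<le> y2" "y2 \<le> Ym"
  shows "\<bar>y2 powr p - y1 powr p\<bar> \<le> p * Ym powr (p - 1) * (y2 - y1)"
proof (rule lip_mvt[OF y(2)])
  show "continuous_on {y1..y2} (\<lambda>x. x powr p)"
    using p y by (intro continuous_on_powr' continuous_intros) auto
  fix z assume z: "z \<in> {y1<..<y2}"
  then have zp: "z > 0" using y by auto
  show "((\<lambda>x. x powr p) has_real_derivative p * z powr (p - 1)) (at z)"
    by (rule has_real_derivative_powr[OF zp])
  have "z powr (p - 1) \<le> Ym powr (p - 1)" using z y p by (intro powr_mono2) auto
  then show "\<bar>p * z powr (p - 1)\<bar> \<le> p * Ym powr (p - 1)" using p by (simp add: abs_mult)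
qed

lemma fcl_lip:
  fixes p Ym :: real
  assumes p: "p > 1" and Y: "0 \<le> Ym"
  shows "\<bar>fcl Ym p x - fcl Ym p y\<bar> \<le> p * Ym powr (p - 1) * \<bar>x - y\<bar>"
proof -
  define c where "c = (\<lambda>x::real. max 0 (min x Ym))"
  have cr: "0 \<le> c x" "c x \<le> Ym" for x using Y by (auto simp: c_def)
  have cl: "\<bar>c x - c y\<bar> \<le> \<bar>x - y\<bar>" for x y by (auto simp: c_def)
  have L: "p * Ym powr (p - 1) \<ge> 0" using p by simp
  have "\<bar>c x powr p - c y powr p\<bar> \<le> p * Ym powr (p - 1) * \<bar>c x - c y\<bar>"
    by (rule lip_sym[where S="{0..Ym}"]) (use powr_lip[OF p] cr in auto)
  also have "\<dots> \<le> p * Ym powr (p - 1) * \<bar>x - y\<bar>" using cl L by (intro mult_left_mono) auto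
  finally show ?thesis by (simp add: fcl_def c_def)
qed

lemma sq_le: "(t1::real) \<le> s \<Longrightarrow> 0 < t1 \<Longrightarrow> 2 \<le> k \<Longrightarrow> t1\<^sup>2 \<le> t1 powr (2 - k) * s powr k"
proof -
  assume a: "t1 \<le> s" "0 < t1" "2 \<le> k"
  have sp: "s > 0" using a by simp
  have "t1\<^sup>2 * 1 \<le> t1\<^sup>2 * (s / t1) powr k"
    using a by (intro mult_left_mono ge_one_powr_ge_zero) auto
  also have "\<dots> = t1 powr (2 - k) * s powr k"
    using sp a by (simp add: powr_diff powr_divide field_simps powr_numeral)
  finally show ?thesis by simp
qed

lemma cot_choice: assumes "0 < t1" "t1 \<le> 1" shows "\<exists>t2. t1 < t2 \<and> t2 < pi \<and> cot t2 < cot t1 - M"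
proof -
  define z where "z = min 1 (1 / (2 * (\<bar>M - cot t1\<bar> + 1)))"
  have q: "0 < 2 * (\<bar>M - cot t1\<bar> + 1)" by (simp add: add_nonneg_pos)
  have zp: "0 < z" "z \<le> 1" using q by (auto simp: z_def)
  have sz: "0 < sin z" "sin z \<le> z" using zp pi_gt3 by (auto intro!: sin_gt_zero sin_x_le_x)
  have cz: "cos z \<ge> 1/2"
  proof -
    have "z\<^sup>2 \<le> 1" using zp by (simp add: power_le_one)
    then show ?thesis using cos_ge_quad[of z] by simp
  qed
  have "cot z = cos z / sin z" by (simp add: cot_def)
  also have "\<dots> \<ge> (1/2) / z" using cz sz zp by (intro frac_le) auto
  finally have c1: "cot z \<ge> 1 / (2 * z)" by simp
  have "1 / (2 * z) \<ge> \<bar>M - cot t1\<bar> + 1"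
  proof -
    have "z \<le> 1 / (2 * (\<bar>M - cot t1\<bar> + 1))" by (simp add: z_def)
    then have "z * (2 * (\<bar>M - cot t1\<bar> + 1)) \<le> 1" using q by (simp add: le_divide_eq)
    then show ?thesis using zp q by (simp add: field_simps)
  qed
  then have "cot z > M - cot t1" using c1 by linarith
  moreover have "cot (pi - z) = - cot z" by (simp add: cot_def)
  ultimately show ?thesis using assms zp pi_gt3 by (intro exI[of _ "pi - z"]) auto
qed

context P begin

lemma c0_pos: "c0 > 0" using p_gt1 a_pos by (simp add: c0_def)

lemma near_lip:
  assumes del: "0 < del" "del \<le> a / 2" and Y: "3 * a / 2 \<le> Ym"
    and eps: "\<And>z. \<bar>z\<bar> \<le> del \<Longrightarrow> \<bar>p * (a + z) powr (p - 1) - c0\<bar> \<le> eps"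
    and hs: "0 < hs" "hs \<le> 1" "1 - hs \<le> beta"
    and xy: "\<bar>x\<bar> \<le> del" "\<bar>y\<bar> \<le> del"
  shows "\<bar>(c0 * x - hs * fcl Ym p (a + x)) - (c0 * y - hs * fcl Ym p (a + y))\<bar>
      \<le> (eps + beta * (p * (3 * a / 2) powr (p - 1))) * \<bar>x - y\<bar>"
proof -
  define phi where "phi = (\<lambda>z. c0 * z - hs * (a + z) powr p)"
  have fe: "fcl Ym p (a + z) = (a + z) powr p" if "\<bar>z\<bar> \<le> del" for z
    using that del Y a_pos by (intro fcl_eq') auto
  have "\<bar>phi x - phi y\<bar> \<le> (eps + beta * (p * (3 * a / 2) powr (p - 1))) * \<bar>x - y\<bar>"
  proof (rule lip_sym[where S="{-del..del}"])
    fix u v assume uv: "u \<le> v" "u \<in> {-del..del}" "v \<in> {-del..del}"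
    show "\<bar>phi v - phi u\<bar> \<le> (eps + beta * (p * (3 * a / 2) powr (p - 1))) * (v - u)"
    proof (rule lip_mvt[OF uv(1)])
      show "continuous_on {u..v} phi"
        unfolding phi_def using uv del a_pos p_gt1
        by (intro continuous_intros continuous_on_powr') auto
      fix z assume z: "z \<in> {u<..<v}"
      have zp: "a + z > 0" using z uv del a_pos by auto
      show "(phi has_real_derivative c0 - hs * (p * (a + z) powr (p - 1))) (at z)"
        unfolding phi_def using zp
        by (auto intro!: derivative_eq_intros DERIV_powr simp: algebra_simps)
      have zd: "\<bar>z\<bar> \<le> del" using z uv by auto
      have pw: "0 \<le> p * (a + z) powr (p - 1)" "p * (a + z) powr (p - 1) \<le> p * (3 * a / 2) powr (p - 1)"
        using zp zd del p_gt1 by (auto intro!: mult_left_mono powr_mono2)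
      have "c0 - hs * (p * (a + z) powr (p - 1)) = (c0 - p * (a + z) powr (p - 1)) + (1 - hs) * (p * (a + z) powr (p - 1))"
        by (simp add: algebra_simps)
      moreover have "\<bar>c0 - p * (a + z) powr (p - 1)\<bar> \<le> eps" using eps[OF zd] by (simp add: abs_minus_commute)
      moreover have "(1 - hs) * (p * (a + z) powr (p - 1)) \<le> beta * (p * (3 * a / 2) powr (p - 1))"
        by (rule mult_mono) (use hs pw in auto)
      moreover have "(1 - hs) * (p * (a + z) powr (p - 1)) \<ge> 0" using hs pw by simp
      ultimately show "\<bar>c0 - hs * (p * (a + z) powr (p - 1))\<bar> \<le> eps + beta * (p * (3 * a / 2) powr (p - 1))"
        by linarith
    qed
  qed (use xy in auto)
  then show ?thesis using fe[OF xy(1)] fe[OF xy(2)] by (simp add: phi_def)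
qed

lemma far_lip:
  assumes hs: "0 < hs" "hs \<le> 1" and Y: "0 \<le> Ym"
  shows "\<bar>(c0 * x - hs * fcl Ym p (a + x)) - (c0 * y - hs * fcl Ym p (a + y))\<bar> \<le> (c0 + p * Ym powr (p - 1)) * \<bar>x - y\<bar>"
proof -
  have "\<bar>(c0 * x - hs * fcl Ym p (a + x)) - (c0 * y - hs * fcl Ym p (a + y))\<bar>
      \<le> c0 * \<bar>x - y\<bar> + hs * \<bar>fcl Ym p (a + x) - fcl Ym p (a + y)\<bar>"
  proof -
    have e: "(c0 * x - hs * fcl Ym p (a + x)) - (c0 * y - hs * fcl Ym p (a + y)) = c0 * (x - y) - hs * (fcl Ym p (a + x) - fcl Ym p (a + y))"
      by (simp add: algebra_simps)
    show ?thesis unfolding e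
      using abs_triangle_ineq4[of "c0 * (x - y)" "hs * (fcl Ym p (a + x) - fcl Ym p (a + y))"] c0_pos hs
      by (simp add: abs_mult)
  qed
  also have "hs * \<bar>fcl Ym p (a + x) - fcl Ym p (a + y)\<bar> \<le> 1 * (p * Ym powr (p - 1) * \<bar>x - y\<bar>)"
    using fcl_lip[OF p_gt1 Y, of "a + x" "a + y"] hs by (intro mult_mono) auto
  finally show ?thesis by (simp add: algebra_simps)
qed

lemma h_small: assumes "0 < s" "s \<le> 1" "real (N - 1) * s\<^sup>2 \<le> 1"
  shows "\<bar>1 / h s - 1\<bar> \<le> real (N - 1) / 5 * s\<^sup>2" "1 - h s \<le> real (N - 1) / 5 * s\<^sup>2" "h s \<le> 1" "h s > 0"
proof -
  have spi: "s < pi" using assms pi_gt3 by linarith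
  show "\<bar>1 / h s - 1\<bar> \<le> real (N - 1) / 5 * s\<^sup>2" by (rule h_inv_bound[OF assms])
  show "h s \<le> 1" by (rule h_le1[OF assms(1) spi])
  show "h s > 0" by (rule h_pos[OF assms(1) spi])
  have "1 - h s \<le> real (N - 1) * s\<^sup>2 / 6" using h_lower[OF assms(1,2)] by linarith
  also have "\<dots> \<le> real (N - 1) / 5 * s\<^sup>2" by simp
  finally show "1 - h s \<le> real (N - 1) / 5 * s\<^sup>2" .
qed

end


lemma div_le_self1: "0 \<le> (x::real) \<Longrightarrow> 1 \<le> y \<Longrightarrow> x / y \<le> x"
  by (simp add: divide_le_eq mult_le_cancel_left1 order.trans[of _ x] mult_left_mono[of 1 y x, simplified])
lemma div_le_K: "0 \<le> (x::real) \<Longrightarrow> 0 < K \<Longrightarrow> K \<le> y \<Longrightarrow> x / y \<le> x / K"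
  by (simp add: frac_le)
lemma contr_arith:
  fixes e1 e2 H L2 m al1 al2 k1 k2 K eta :: real
  assumes "0 \<le> e1" "0 \<le> e2" "0 \<le> H" "0 \<le> L2" "0 \<le> m" "2 \<le> al1" "2 \<le> al2" "K \<le> k1" "K \<le> k2" "1 \<le> K"
    "e2 + m*e1 + e1 \<le> eta" "L2 + m*H + H \<le> eta * K"
  shows "(1+m)*(((e2 + m*e1)/al2 + (L2+m*H)/k2 + e1)/al1 + ((e2+m*e1)/al2 + (L2+m*H)/k2 + H)/k1) + ((e2+m*e1)/al2 + (L2+m*H)/k2) \<le> (8 + 6*m) * eta"
proof -
  have K0: "K > 0" using assms by simp
  have me: "0 \<le> m * e1" "0 \<le> m * H" using assms by auto
  have A: "(e2 + m*e1)/al2 \<le> e2 + m*e1" using assms me by (intro div_le_self1) auto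
  have B0: "(L2+m*H)/k2 \<le> (L2+m*H)/K" using assms me K0 by (intro div_le_K) auto
  have B1: "(L2+m*H)/K \<le> eta" using assms K0 by (simp add: divide_le_eq)
  define P2 where "P2 = (e2 + m*e1)/al2 + (L2+m*H)/k2"
  have P2n: "0 \<le> P2" using assms me unfolding P2_def by (intro add_nonneg_nonneg divide_nonneg_nonneg) auto
  have P2: "P2 \<le> 2 * eta" using A B0 B1 assms unfolding P2_def by linarith
  have C: "(P2 + e1)/al1 \<le> P2 + e1" using P2n assms by (intro div_le_self1) auto
  have D0: "(P2 + H)/k1 \<le> (P2 + H)/K" using P2n assms K0 by (intro div_le_K) auto
  have D1: "(P2 + H)/K = P2/K + H/K" by (simp add: add_divide_distrib)
  have D2: "P2/K \<le> P2" using P2n assms by (intro div_le_self1) auto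
  have "H \<le> eta * K" using assms me by linarith
  then have D3: "H/K \<le> eta" using K0 by (simp add: divide_le_eq)
  have S: "(P2 + e1)/al1 + (P2 + H)/k1 \<le> 6 * eta" using C D0 D1 D2 D3 P2 assms me by linarith
  have "(1+m) * ((P2 + e1)/al1 + (P2 + H)/k1) \<le> (1+m) * (6*eta)"
    using S assms by (intro mult_left_mono) auto
  then show ?thesis using P2 unfolding P2_def by (simp add: algebra_simps)
qed

context P begin

lemma exists_Q: "\<exists>Ym t1 t2 kap del r e1 e2 H L2 F1 F1f F2 F2f. Q N p Ym t1 t2 kap del r e1 e2 H L2 F1 F1f F2 F2f"
proof -
  define m where "m = cmod (lam1 - of_real mu)"
  have m0: "m \<ge> 0" by (simp add: m_def)
  define eta where "eta = 1 / (2 * (8 + 6 * m))"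
  have eta0: "eta > 0" using m0 by (simp add: eta_def)
  have Nm: "real (N - 1) > 0" using N3 by simp
  have ic: "isCont (\<lambda>z. p * (a + z) powr (p - 1)) 0"
    using a_pos by (auto intro!: continuous_intros)
  obtain del0 where del0: "del0 > 0" "\<And>z. z \<noteq> 0 \<and> norm (z - 0) < del0 \<Longrightarrow>
      norm (p * (a + z) powr (p - 1) - p * (a + 0) powr (p - 1)) < eta / 3"
    using LIM_D[OF ic[unfolded isCont_def], of "eta / 3"] eta0 by auto
  define del where "del = min (del0 / 2) (min (a / 2) (mu * a / 2))"
  have del: "0 < del" "del \<le> a / 2" "del \<le> mu * a / 2" "del < del0"
    using del0 a_pos mu_pos by (auto simp: del_def)
  have eps: "\<bar>p * (a + z) powr (p - 1) - c0\<bar> \<le> eta / 3" if "\<bar>z\<bar> \<le> del" for z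
  proof (cases "z = 0")
    case True then show ?thesis using eta0 by (simp add: c0_def)
  next
    case False then show ?thesis using del0(2)[of z] that del by (simp add: c0_def)
  qed
  define F1 where "F1 = mu * a * (real (N - 1) / 5)"
  define F2 where "F2 = a powr p * (real (N - 1) / 5)"
  have F0: "F1 \<ge> 0" "F2 \<ge> 0" using mu_pos a_pos by (auto simp: F1_def F2_def)
  define eta' where "eta' = F2 + m * F1 + F1 + 1"
  have eta'0: "eta' > 0" using F0 m0 by (simp add: eta'_def add_nonneg_pos)
  define r where "r = 2 * (8 + 6 * m) * eta'"
  have r0: "r > 0" using eta'0 m0 by (simp add: r_def)
  define C3 where "C3 = p * (3 * a / 2) powr (p - 1)"
  have C3: "C3 > 0" using p_gt1 a_pos by (simp add: C3_def)
  define rho where "rho = min (1 / real (N - 1)) (min (del / r) (min (eta / 3 / ((1 + m) * (real (N - 1) / 5))) (eta / 3 / ((real (N - 1) / 5) * C3))))"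
  have rho0: "rho > 0" using Nm del r0 eta0 m0 C3 by (simp add: rho_def)
  define t1 where "t1 = min 1 (sqrt rho)"
  have t1: "0 < t1" "t1 \<le> 1" using rho0 by (auto simp: t1_def)
  have t1sq: "t1\<^sup>2 \<le> rho"
  proof -
    have "t1\<^sup>2 \<le> (sqrt rho)\<^sup>2" using t1 by (intro power_mono) (auto simp: t1_def)
    then show ?thesis using rho0 by simp
  qed
  have c1: "real (N - 1) * t1\<^sup>2 \<le> 1"
  proof -
    have "t1\<^sup>2 \<le> 1 / real (N - 1)" using t1sq by (simp add: rho_def)
    then show ?thesis using Nm by (simp add: field_simps)
  qed
  have c2: "r * t1\<^sup>2 \<le> del"
  proof -
    have "t1\<^sup>2 \<le> del / r" using t1sq by (simp add: rho_def)
    then show ?thesis using r0 by (simp add: field_simps)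
  qed
  define e1 where "e1 = real (N - 1) / 5 * t1\<^sup>2"
  have e10: "e1 \<ge> 0" by (simp add: e1_def)
  have c3: "(1 + m) * e1 \<le> eta / 3"
  proof -
    have "t1\<^sup>2 \<le> eta / 3 / ((1 + m) * (real (N - 1) / 5))" using t1sq by (simp add: rho_def)
    moreover have D: "(1 + m) * (real (N - 1) / 5) > 0" using Nm m0 by (simp add: add_pos_nonneg)
    ultimately have "t1\<^sup>2 * ((1 + m) * (real (N - 1) / 5)) \<le> eta / 3" using pos_le_divide_eq[OF D] by blast
    moreover have "(1 + m) * e1 = t1\<^sup>2 * ((1 + m) * (real (N - 1) / 5))" by (simp add: e1_def algebra_simps)
    ultimately show ?thesis by linarith
  qed
  have c4: "e1 * C3 \<le> eta / 3"
  proof -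
    have "t1\<^sup>2 \<le> eta / 3 / ((real (N - 1) / 5) * C3)" using t1sq by (simp add: rho_def)
    moreover have D: "(real (N - 1) / 5) * C3 > 0" using Nm C3 by simp
    ultimately have "t1\<^sup>2 * ((real (N - 1) / 5) * C3) \<le> eta / 3" using pos_le_divide_eq[OF D] by blast
    moreover have "e1 * C3 = t1\<^sup>2 * ((real (N - 1) / 5) * C3)" by (simp add: e1_def algebra_simps)
    ultimately show ?thesis by linarith
  qed
  define e2 where "e2 = eta / 3 + e1 * C3"
  have e20: "e2 \<ge> 0" using eta0 e10 C3 by (simp add: e2_def)
  have small_part: "e2 + m * e1 + e1 \<le> eta" using c3 c4 by (simp add: e2_def algebra_simps)
  define Mz where "Mz = t1 powr (- mu) * (3 * a / 2) / (t1 powr d * mu * a / 2)"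
  obtain t2 where t2: "t1 < t2" "t2 < pi" "cot t2 < cot t1 - Mz"
    using cot_choice[OF t1] by blast
  have cpos: "t1 powr d * mu * a / 2 > 0" using t1 mu_pos a_pos by simp
  have zero: "(cot t1 - cot t2) * (t1 powr d * mu * a / 2) > t1 powr (- mu) * (3 * a / 2)"
  proof -
    have "Mz * (t1 powr d * mu * a / 2) = t1 powr (- mu) * (3 * a / 2)"
      unfolding Mz_def using cpos by (metis nonzero_eq_divide_eq order_less_irrefl)
    moreover have "Mz * (t1 powr d * mu * a / 2) < (cot t1 - cot t2) * (t1 powr d * mu * a / 2)"
      using t2 cpos by (intro mult_strict_right_mono) auto
    ultimately show ?thesis by linarith
  qed
  define Ym where "Ym = max (3 * a / 2) (pi powr mu * t1 powr (- mu) * (3 * a / 2))"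
  have Ym: "3 * a / 2 \<le> Ym" "pi powr mu * t1 powr (- mu) * (3 * a / 2) \<le> Ym" "0 \<le> Ym"
    using a_pos by (auto simp: Ym_def)
  have "\<exists>x\<in>{t1..t2}. \<forall>y\<in>{t1..t2}. h x \<le> h y"
    using t1 t2 by (intro continuous_attains_inf continuous_on_subset[OF h_cont]) auto
  then obtain sm where sm: "sm \<in> {t1..t2}" "\<And>y. y \<in> {t1..t2} \<Longrightarrow> h sm \<le> h y" by blast
  define hm where "hm = h sm"
  have hm: "hm > 0" using sm t1 t2 by (auto simp: hm_def intro!: h_pos)
  define H where "H = max (real (N - 1) / 5) (1 / hm + 1)"
  have H0: "H \<ge> 0" by (simp add: H_def)
  define L2 where "L2 = c0 + p * Ym powr (p - 1)"
  have L20: "L2 \<ge> 0" using c0_pos p_gt1 by (simp add: L2_def)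
  define F1f where "F1f = mu * a * H / t1\<^sup>2"
  define F2f where "F2f = a powr p / t1\<^sup>2"
  have Ff0: "F1f \<ge> 0" "F2f \<ge> 0" using mu_pos a_pos H0 by (auto simp: F1f_def F2f_def)
  define kap where "kap = max 2 (max ((L2 + m * H + H) / eta) ((F2f + m * F1f + F1f) / eta'))"
  have kap: "2 \<le> kap" "(L2 + m * H + H) / eta \<le> kap" "(F2f + m * F1f + F1f) / eta' \<le> kap"
    by (auto simp: kap_def)
  have big1: "L2 + m * H + H \<le> eta * kap" using kap(2) eta0 by (simp add: divide_le_eq mult.commute)
  have big2: "F2f + m * F1f + F1f \<le> eta' * kap" using kap(3) eta'0 by (simp add: divide_le_eq mult.commute)
  have near_t1: "s \<le> 1 \<and> real (N - 1) * s\<^sup>2 \<le> 1 \<and> s\<^sup>2 \<le> t1\<^sup>2" if "s \<in> {0<..t1}" for s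
  proof -
    have ss: "s\<^sup>2 \<le> t1\<^sup>2" using that by (intro power_mono) auto
    then have "real (N - 1) * s\<^sup>2 \<le> real (N - 1) * t1\<^sup>2" by (intro mult_left_mono) auto
    then show ?thesis using that t1 c1 ss by auto
  qed
  have he1: "\<bar>1 / h s - 1\<bar> \<le> e1" if s: "s \<in> {0<..t1}" for s
  proof -
    have "\<bar>1 / h s - 1\<bar> \<le> real (N - 1) / 5 * s\<^sup>2" using h_small(1)[of s] near_t1[OF s] s by auto
    also have "\<dots> \<le> e1" using near_t1[OF s] unfolding e1_def by (intro mult_left_mono) auto
    finally show ?thesis .
  qed
  have e1H: "e1 \<le> H"
  proof -
    have "t1\<^sup>2 \<le> 1" using t1 by (simp add: power_le_one)
    then have "e1 \<le> real (N - 1) / 5" unfolding e1_def using Nm by (simp add: mult_le_cancel_left1)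
    then show ?thesis by (simp add: H_def)
  qed
  have hH: "\<bar>1 / h s - 1\<bar> \<le> H" if s: "s \<in> {0<..t2}" for s
  proof (cases "s \<le> t1")
    case True then show ?thesis using he1[of s] s e1H by auto
  next
    case False
    then have s': "s \<in> {t1..t2}" using s by auto
    have hs: "h s \<ge> hm" using sm(2)[OF s'] by (simp add: hm_def)
    then have "1 / h s \<le> 1 / hm" using hm by (intro divide_left_mono) auto
    moreover have "1 / h s > 0" using hs hm by simp
    ultimately have "\<bar>1 / h s - 1\<bar> \<le> 1 / hm + 1" by linarith
    then show ?thesis by (simp add: H_def)
  qed
  have hs01: "0 < h s \<and> h s \<le> 1" if s: "s \<in> {0<..t2}" for s
    using s t2 by (auto intro!: h_pos h_le1)
  have q: "Q N p Ym t1 t2 kap del r e1 e2 H L2 F1 F1f F2 F2f"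
  proof (unfold_locales)
    show "0 < t1" "t1 < t2" "t2 < pi" using t1 t2 by auto
    show "2 \<le> kap" by (rule kap(1))
    show "0 < del" "del \<le> a / 2" "del \<le> mu * a / 2" using del by auto
    show "0 < r" "r * t1\<^sup>2 \<le> del" using r0 c2 by auto
    show "0 \<le> e1" "0 \<le> e2" "0 \<le> H" "0 \<le> L2" "0 \<le> F1" "0 \<le> F1f" "0 \<le> F2" "0 \<le> F2f"
      using e10 e20 H0 L20 F0 Ff0 by auto
    show "3 * a / 2 \<le> Ym" "pi powr mu * t1 powr - mu * (3 * a / 2) \<le> Ym" using Ym by auto
    show "\<And>s. s \<in> {0<..t1} \<Longrightarrow> \<bar>1 / h s - 1\<bar> \<le> e1" by (rule he1)
    show "\<And>s. s \<in> {0<..t2} \<Longrightarrow> \<bar>1 / h s - 1\<bar> \<le> H" by (rule hH)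
    show "\<bar>c0 * x - h s * fcl Ym p (a + x) - (c0 * y - h s * fcl Ym p (a + y))\<bar> \<le> e2 * \<bar>x - y\<bar>"
      if s: "s \<in> {0<..t1}" and x: "\<bar>x\<bar> \<le> del" and y: "\<bar>y\<bar> \<le> del" for s x y
    proof -
      have s1: "s \<le> 1" "real (N - 1) * s\<^sup>2 \<le> 1" "s\<^sup>2 \<le> t1\<^sup>2" using near_t1[OF s] by auto
      have b: "1 - h s \<le> e1"
        using h_small(2)[of s] s s1 by (smt (verit) e1_def greaterThanAtMost_iff mult_left_mono of_nat_0_le_iff divide_nonneg_pos zero_less_numeral)
      have "\<bar>c0 * x - h s * fcl Ym p (a + x) - (c0 * y - h s * fcl Ym p (a + y))\<bar> \<le> (eta / 3 + e1 * (p * (3 * a / 2) powr (p - 1))) * \<bar>x - y\<bar>"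
        by (rule near_lip[OF del(1,2) Ym(1) eps _ _ b x y]) (use h_small[of s] s s1 in auto)
      then show ?thesis by (simp add: e2_def C3_def)
    qed
    show "\<bar>c0 * x - h s * fcl Ym p (a + x) - (c0 * y - h s * fcl Ym p (a + y))\<bar> \<le> L2 * \<bar>x - y\<bar>"
      if s: "s \<in> {0<..t2}" for s x y
      using far_lip[of "h s" Ym x y] hs01[OF s] Ym(3) by (simp add: L2_def)
    show "mu * a * \<bar>1 / h s - 1\<bar> \<le> F1 * s\<^sup>2 + F1f * (t1 powr (2 - kap) * s powr kap)" if s: "s \<in> {0<..t2}" for s
    proof -
      have T0: "0 \<le> F1f * (t1 powr (2 - kap) * s powr kap)" using Ff0 by simp
      have T1: "0 \<le> F1 * s\<^sup>2" using F0 by simp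
      have ma: "mu * a > 0" using mu_pos a_pos by simp
      show ?thesis
      proof (cases "s \<le> t1")
        case True
        then have s': "s \<in> {0<..t1}" using s by auto
        have "\<bar>1 / h s - 1\<bar> \<le> real (N - 1) / 5 * s\<^sup>2" using h_small(1)[of s] near_t1[OF s'] s' by auto
        then have "mu * a * \<bar>1 / h s - 1\<bar> \<le> mu * a * (real (N - 1) / 5 * s\<^sup>2)" using ma by (intro mult_left_mono) auto
        then show ?thesis using T0 by (simp add: F1_def algebra_simps)
      next
        case False
        have "mu * a * \<bar>1 / h s - 1\<bar> \<le> mu * a * H" using hH[OF s] ma by (intro mult_left_mono) auto
        also have "\<dots> = F1f * t1\<^sup>2" using t1 by (simp add: F1f_def)
        also have "\<dots> \<le> F1f * (t1 powr (2 - kap) * s powr kap)"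
          using sq_le[of t1 s kap] False t1 kap Ff0 by (intro mult_left_mono) auto
        finally show ?thesis using T1 by linarith
      qed
    qed
    show "\<bar>a powr p - h s * fcl Ym p a\<bar> \<le> F2 * s\<^sup>2 + F2f * (t1 powr (2 - kap) * s powr kap)" if s: "s \<in> {0<..t2}" for s
    proof -
      have T0: "0 \<le> F2f * (t1 powr (2 - kap) * s powr kap)" using Ff0 by simp
      have T1: "0 \<le> F2 * s\<^sup>2" using F0 by simp
      have fa: "fcl Ym p a = a powr p" using a_pos Ym by (intro fcl_eq') auto
      have ap: "a powr p > 0" using a_pos by simp
      have e: "\<bar>a powr p - h s * fcl Ym p a\<bar> = a powr p * (1 - h s)" using hs01[OF s] ap
        by (simp add: fa abs_of_nonneg algebra_simps)
      show ?thesis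
      proof (cases "s \<le> t1")
        case True
        then have s': "s \<in> {0<..t1}" using s by auto
        have "1 - h s \<le> real (N - 1) / 5 * s\<^sup>2" using h_small(2)[of s] near_t1[OF s'] s' by auto
        then have "a powr p * (1 - h s) \<le> a powr p * (real (N - 1) / 5 * s\<^sup>2)" using ap by (intro mult_left_mono) auto
        then show ?thesis using T0 e by (simp add: F2_def algebra_simps)
      next
        case False
        have "a powr p * (1 - h s) \<le> a powr p * 1" using hs01[OF s] ap by (intro mult_left_mono) auto
        also have "\<dots> = F2f * t1\<^sup>2" using t1 by (simp add: F2f_def)
        also have "\<dots> \<le> F2f * (t1 powr (2 - kap) * s powr kap)"
          using sq_le[of t1 s kap] False t1 kap Ff0 by (intro mult_left_mono) auto
        finally show ?thesis using T1 e by linarith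
      qed
    qed
    have al: "2 \<le> 2 - Re lam1" "2 \<le> 2 - Re lam2" "kap \<le> kap - Re lam1" "kap \<le> kap - Re lam2" "1 \<le> kap"
      using Re_lam1 Re_lam2 kap by auto
    show "(1 + cmod (lam1 - of_real mu)) *
        (((e2 + cmod (lam1 - of_real mu) * e1) / (2 - Re lam2) + (L2 + cmod (lam1 - of_real mu) * H) / (kap - Re lam2) + e1) / (2 - Re lam1)
        + ((e2 + cmod (lam1 - of_real mu) * e1) / (2 - Re lam2) + (L2 + cmod (lam1 - of_real mu) * H) / (kap - Re lam2) + H) / (kap - Re lam1))
        + ((e2 + cmod (lam1 - of_real mu) * e1) / (2 - Re lam2) + (L2 + cmod (lam1 - of_real mu) * H) / (kap - Re lam2)) \<le> 1/2"
    proof -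
      have "(1 + m) * (((e2 + m * e1) / (2 - Re lam2) + (L2 + m * H) / (kap - Re lam2) + e1) / (2 - Re lam1)
        + ((e2 + m * e1) / (2 - Re lam2) + (L2 + m * H) / (kap - Re lam2) + H) / (kap - Re lam1))
        + ((e2 + m * e1) / (2 - Re lam2) + (L2 + m * H) / (kap - Re lam2)) \<le> (8 + 6 * m) * eta"
        by (rule contr_arith[OF e10 e20 H0 L20 m0 al small_part big1])
      also have "\<dots> = 1/2" using m0 by (simp add: eta_def)
      finally show ?thesis by (simp add: m_def)
    qed
    show "(1 + cmod (lam1 - of_real mu)) *
        (((F2 + cmod (lam1 - of_real mu) * F1) / (2 - Re lam2) + (F2f + cmod (lam1 - of_real mu) * F1f) / (kap - Re lam2) + F1) / (2 - Re lam1)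
        + ((F2 + cmod (lam1 - of_real mu) * F1) / (2 - Re lam2) + (F2f + cmod (lam1 - of_real mu) * F1f) / (kap - Re lam2) + F1f) / (kap - Re lam1))
        + ((F2 + cmod (lam1 - of_real mu) * F1) / (2 - Re lam2) + (F2f + cmod (lam1 - of_real mu) * F1f) / (kap - Re lam2)) \<le> r/2"
    proof -
      have sp: "F2 + m * F1 + F1 \<le> eta'" by (simp add: eta'_def)
      have "(1 + m) * (((F2 + m * F1) / (2 - Re lam2) + (F2f + m * F1f) / (kap - Re lam2) + F1) / (2 - Re lam1)
        + ((F2 + m * F1) / (2 - Re lam2) + (F2f + m * F1f) / (kap - Re lam2) + F1f) / (kap - Re lam1))
        + ((F2 + m * F1) / (2 - Re lam2) + (F2f + m * F1f) / (kap - Re lam2)) \<le> (8 + 6 * m) * eta'"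
        by (rule contr_arith[OF F0(1) F0(2) Ff0(1) Ff0(2) m0 al sp big2])
      also have "\<dots> = r / 2" by (simp add: r_def)
      finally show ?thesis by (simp add: m_def)
    qed
    show "t1 powr - mu * (3 * a / 2) < (cot t1 - cot t2) * (t1 powr d * mu * a / 2)" using zero by simp
  qed
  then show ?thesis by blast
qed

end

theorem theoremC:
  fixes N :: nat and p :: real
  assumes "N \<ge> 3" and "p > (real N + 2) / (real N - 2)"
  shows "\<exists>\<Theta> U U' U''. 0 < \<Theta> \<and> \<Theta> < pi \<and>
     (\<forall>x\<in>{0<..\<Theta>}. (U has_real_derivative U' x) (at x within {0<..\<Theta>}) \<and>
                         (U' has_real_derivative U'' x) (at x within {0<..\<Theta>})) \<and>
     continuous_on {0<..\<Theta>} U'' \<and>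
     (\<forall>x\<in>{0<..<\<Theta>}. U'' x + (real N - 1) * (cos x / sin x) * U' x + U x powr p = 0) \<and>
     U \<Theta> = 0 \<and>
     (\<forall>x\<in>{0<..<\<Theta>}. U x > 0) \<and>
     (let \<mu> = 2 / (p - 1); a = (\<mu> * (real N - 2 - \<mu>)) powr (\<mu> / 2) in
       ((\<lambda>x. U x / (a * cos (x / 2) powr (-(real N - 2)) * (2 * tan (x / 2)) powr (-\<mu>)))
          \<longlongrightarrow> 1) (at_right 0))"
proof -
  interpret P N p by unfold_locales (use assms in auto)
  obtain Ym t1 t2 kap del r e1 e2 H L2 F1 F1f F2 F2f where q: "Q N p Ym t1 t2 kap del r e1 e2 H L2 F1 F1f F2 F2f"
    using exists_Q by blast
  interpret Q N p Ym t1 t2 kap del r e1 e2 H L2 F1 F1f F2 F2f by (rule q)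
  show ?thesis by (rule main_Q)
qed


end
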